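(* Let $q_0=p^m$ be an odd prime power, $q=q_0^2$, $s=q_0\frac{q_0^2+1}{2}$ and $g=\frac{(q_0-1)^2}{4}$. Then for every integer $r$ with $\frac{g-3}{2}<r<\frac{s-g-2}{2}$ there exists a $1$-dim hull code over $\mathbb{F}_q$ with parameters $[s-1,2r+2,\ge s-2r-g-2]$ whose dual has parameters $[s-1,s-2r-3,\ge2r-g+3]$.
   Context: $[n,k,\ge d]$ denotes a linear code of length $n$, dimension $k$ and minimum distance at least $d$. The hull of a linear code $C$ is $C\cap C^\perp$ (Euclidean dual), and $C$ is a $1$-dim hull code if $\dim(C\cap C^\perp)=1$. *)

theory Defs
  imports Complex_Main "HOL-Library.Function_Algebras" "HOL-Computational_Algebra.Primes"
begin

text \<open>Vectors of length n over a field 'a are modelled as functions nat => 'a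
  vanishing outside {0..<n}.\<close>

definition vecs :: "nat \<Rightarrow> (nat \<Rightarrow> 'a::field) set" where
  "vecs n = {v. \<forall>i\<ge>n. v i = 0}"

definition sc :: "'a::field \<Rightarrow> (nat \<Rightarrow> 'a) \<Rightarrow> (nat \<Rightarrow> 'a)" where
  "sc c v = (\<lambda>i. c * v i)"

lemma vector_space_sc: "vector_space (sc :: 'a::field \<Rightarrow> _)"
  by unfold_locales (auto simp: sc_def fun_eq_iff algebra_simps)

definition vdim :: "(nat \<Rightarrow> 'a::field) set \<Rightarrow> nat" where
  "vdim C = vector_space.dim (sc :: 'a \<Rightarrow> _) C"

definition linear_code :: "nat \<Rightarrow> (nat \<Rightarrow> 'a::field) set \<Rightarrow> bool" where
  "linear_code n C \<longleftrightarrow> C \<subseteq> vecs n \<and> (\<lambda>i. 0) \<in> C \<and>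
     (\<forall>x\<in>C. \<forall>y\<in>C. (\<lambda>i. x i + y i) \<in> C) \<and> (\<forall>c. \<forall>x\<in>C. sc c x \<in> C)"

definition hamming_dist :: "nat \<Rightarrow> (nat \<Rightarrow> 'a) \<Rightarrow> (nat \<Rightarrow> 'a) \<Rightarrow> nat" where
  "hamming_dist n x y = card {i. i < n \<and> x i \<noteq> y i}"

definition code_params :: "nat \<Rightarrow> nat \<Rightarrow> int \<Rightarrow> (nat \<Rightarrow> 'a::field) set \<Rightarrow> bool" where
  "code_params n k d C \<longleftrightarrow> linear_code n C \<and> vdim C = k \<and>
     (\<forall>x\<in>C. \<forall>y\<in>C. x \<noteq> y \<longrightarrow> int (hamming_dist n x y) \<ge> d)"

definition dual_code :: "nat \<Rightarrow> (nat \<Rightarrow> 'a::field) set \<Rightarrow> (nat \<Rightarrow> 'a) set" where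
  "dual_code n C = {v \<in> vecs n. \<forall>c\<in>C. (\<Sum>i<n. v i * c i) = 0}"

definition code_hull :: "nat \<Rightarrow> (nat \<Rightarrow> 'a::field) set \<Rightarrow> (nat \<Rightarrow> 'a) set" where
  "code_hull n C = C \<inter> dual_code n C"

end

theory Submission
  imports Defs "HOL-Computational_Algebra.Polynomial" "HOL-Library.FuncSet"
begin

lemma card_roots_pow:
  fixes c :: "'a::field"
  assumes "d \<ge> 1"
  shows "card {x. x ^ d = c} \<le> d"
proof -
  let ?P = "monom 1 d + [:-c:]"
  have deg: "degree ?P = d" using assms by (subst degree_add_eq_left) (auto simp: degree_monom_eq)
  have "?P \<noteq> 0" using assms deg by auto
  then have "card {x. poly ?P x = 0} \<le> degree ?P" by (rule card_poly_roots_bound)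
  moreover have "{x. poly ?P x = 0} = {x. x ^ d = c}" by (auto simp: poly_monom)
  ultimately show ?thesis using deg by simp
qed

lemma card_roots_trinom:
  fixes a c :: "'a::field"
  assumes "d \<ge> 2"
  shows "card {x. x ^ d + a * x + c = 0} \<le> d"
proof -
  let ?P = "monom 1 d + [:c, a:]"
  have deg: "degree ?P = d" using assms by (subst degree_add_eq_left) (auto simp: degree_monom_eq)
  have "?P \<noteq> 0" using assms deg by auto
  then have "card {x. poly ?P x = 0} \<le> degree ?P" by (rule card_poly_roots_bound)
  moreover have "{x. poly ?P x = 0} = {x. x ^ d + a * x + c = 0}" by (auto simp: poly_monom algebra_simps)
  ultimately show ?thesis using deg by simp
qed

lemma card_fibers:
  assumes "finite A" "finite B" "f ` A \<subseteq> B"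
  shows "card A = (\<Sum>b\<in>B. card {a\<in>A. f a = b})"
  using sum.group[OF assms, of "\<lambda>_. 1::nat"] by simp

lemma fiber_count:
  fixes f :: "'x \<Rightarrow> 'y"
  assumes fA: "finite A" and fB: "finite B" and img: "f ` A \<subseteq> B" and cB: "card B \<le> b"
    and fib: "\<And>y. y \<in> B \<Longrightarrow> card {x\<in>A. f x = y} \<le> a"
    and cA: "card A = a * b"
  shows "\<And>y. y \<in> B \<Longrightarrow> card {x\<in>A. f x = y} = a"
proof -
  have s1: "card A = (\<Sum>y\<in>B. card {x\<in>A. f x = y})"
    using sum.group[OF fA fB img, of "\<lambda>_. 1::nat"] by simp
  have s2: "(\<Sum>y\<in>B. (a - card {x\<in>A. f x = y})) + (\<Sum>y\<in>B. card {x\<in>A. f x = y}) = (\<Sum>y\<in>B. a)"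
    by (subst sum.distrib[symmetric]) (intro sum.cong; use fib in auto)
  have "(\<Sum>y\<in>B. a) \<le> a * b" using cB by (simp add: mult.commute)
  then have z: "(\<Sum>y\<in>B. (a - card {x\<in>A. f x = y})) = 0" using s1 s2 cA by linarith
  fix y assume y: "y \<in> B"
  have "a - card {x\<in>A. f x = y} = 0" using z y fB by (simp add: sum_eq_0_iff)
  then show "card {x\<in>A. f x = y} = a" using fib[OF y] by simp
qed

locale hfield =
  fixes p m q0 :: nat and ty :: "'a::{field,finite} itself"
  assumes p_prime: "prime p" and p_odd: "odd p" and m_ge: "m \<ge> 1" and q0_def: "q0 = p ^ m"
    and card_F: "card (UNIV::'a set) = q0 ^ 2"
begin

abbreviation "q \<equiv> q0 ^ 2"

lemma q0_ge3: "q0 \<ge> 3"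
proof -
  have "p \<ge> 3" using p_prime p_odd prime_ge_2_nat[OF p_prime]
    by (metis One_nat_def Suc_1 dvd_refl le_antisym not_less_eq_eq numeral_3_eq_3)
  moreover have "p \<le> p ^ m" using m_ge prime_gt_0_nat[OF p_prime]
    by (simp add: self_le_power)
  ultimately show ?thesis using q0_def by simp
qed

lemma q0_odd: "odd q0" using p_odd q0_def by simp

lemma of_nat_card: "(of_nat (card (UNIV::'a set)) :: 'a) = 0"
proof -
  have "(\<Sum>y\<in>(UNIV::'a set). y + 1) = (\<Sum>y\<in>UNIV. y)"
    by (rule sum.reindex_bij_witness[of _ "\<lambda>y. y - 1" "\<lambda>y. y + 1"]) auto
  then show ?thesis by (simp add: sum.distrib)
qed

lemma char_p: "(of_nat p :: 'a) = 0"
proof -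
  have "(of_nat p :: 'a) ^ (2*m) = of_nat (p ^ (2*m))" by simp
  also have "p ^ (2*m) = card (UNIV::'a set)" using card_F q0_def by (simp add: power_mult mult.commute)
  finally have "(of_nat p :: 'a) ^ (2*m) = 0" using of_nat_card by simp
  then show ?thesis by simp
qed

lemma two_ne0: "(2::'a) \<noteq> 0"
proof
  assume h: "(2::'a) = 0"
  obtain k where "p = 2*k+1" using p_odd oddE by blast
  then have "(of_nat p :: 'a) = 2 * of_nat k + 1" by simp
  then have "(of_nat p :: 'a) = 1" using h by simp
  then show False using char_p by simp
qed

lemma frob_p: "((a::'a) + b) ^ p = a ^ p + b ^ p"
proof -
  have "(a + b) ^ p = (\<Sum>k\<le>p. of_nat (p choose k) * a^k * b^(p-k))" by (rule binomial_ring)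
  also have "\<dots> = (\<Sum>k\<in>{0,p}. of_nat (p choose k) * a^k * b^(p-k))"
  proof (rule sum.mono_neutral_right)
    show "\<forall>k\<in>{..p} - {0, p}. of_nat (p choose k) * a ^ k * b ^ (p - k) = 0"
    proof
      fix k assume k: "k \<in> {..p} - {0,p}"
      then have "p dvd (p choose k)" using p_prime by (intro dvd_choose_prime) auto
      then obtain t where "p choose k = p * t" by blast
      then have "(of_nat (p choose k) :: 'a) = 0" using char_p by simp
      then show "of_nat (p choose k) * a ^ k * b ^ (p - k) = 0" by simp
    qed
  qed auto
  also have "\<dots> = a ^ p + b ^ p" using prime_gt_0_nat[OF p_prime] by auto
  finally show ?thesis .
qed

lemma frob_pow: "((a::'a) + b) ^ (p ^ e) = a ^ (p ^ e) + b ^ (p ^ e)"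
proof (induction e)
  case 0 then show ?case by simp
next
  case (Suc e)
  have "(a + b) ^ (p ^ Suc e) = ((a + b) ^ (p ^ e)) ^ p" by (simp add: power_mult[symmetric] mult.commute)
  also have "\<dots> = (a ^ (p ^ e)) ^ p + (b ^ (p ^ e)) ^ p" using Suc frob_p by simp
  also have "\<dots> = a ^ (p ^ Suc e) + b ^ (p ^ Suc e)" by (simp add: power_mult[symmetric] mult.commute)
  finally show ?case .
qed

lemma frob: "((a::'a) + b) ^ q0 = a ^ q0 + b ^ q0"
  using frob_pow q0_def by simp

lemma frob_neg: "(- (a::'a)) ^ q0 = - (a ^ q0)"
  using q0_odd by (simp add: power_minus_odd)

lemma frob_diff: "((a::'a) - b) ^ q0 = a ^ q0 - b ^ q0"
  using frob[of a "-b"] frob_neg[of b] by simp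

lemma fermat: "(x::'a) \<noteq> 0 \<Longrightarrow> x ^ (q - 1) = 1"
proof -
  assume x: "x \<noteq> 0"
  let ?S = "UNIV - {0::'a}"
  have cS: "card ?S = q - 1" using card_F by (simp add: card_Diff_singleton)
  have "(\<Prod>y\<in>?S. x * y) = (\<Prod>y\<in>?S. y)"
    by (rule prod.reindex_bij_witness[of _ "\<lambda>y. y / x" "\<lambda>y. x * y"]) (use x in auto)
  then have "x ^ card ?S * (\<Prod>y\<in>?S. y) = (\<Prod>y\<in>?S. y)" by (simp add: prod.distrib)
  moreover have "(\<Prod>y\<in>?S. y) \<noteq> 0" by simp
  ultimately show ?thesis using cS by simp
qed

lemma q_pos: "q \<ge> 9"
proof -
  have "3*3 \<le> q0 * q0" using q0_ge3 by (intro mult_mono) auto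
  then show ?thesis by (simp add: power2_eq_square)
qed

lemma fermat_q: "(x::'a) ^ q = x"
proof (cases "x = 0")
  case True then show ?thesis using q0_ge3 by (simp add: zero_power)
next
  case False
  have "q = Suc (q - 1)" using q_pos by simp
  then have "x ^ q = x ^ (q - 1) * x" by (metis power_Suc2)
  then show ?thesis using fermat[OF False] by simp
qed

definition Tr :: "'a \<Rightarrow> 'a" where "Tr x = x ^ q0 + x"

lemma Tr_add: "Tr (a + b) = Tr a + Tr b" by (simp add: Tr_def frob)
lemma Tr_diff: "Tr (a - b) = Tr a - Tr b" by (simp add: Tr_def frob_diff)

definition Tset :: "'a set" where "Tset = {t. t ^ q0 = t}"

lemma pow_q0_q0: "((x::'a) ^ q0) ^ q0 = x"
proof -
  have "x ^ (q0 * q0) = x" using fermat_q[of x] by (simp add: power2_eq_square)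
  then show ?thesis by (simp add: power_mult[symmetric])
qed

lemma Tr_in_T: "Tr x \<in> Tset"
  by (simp add: Tset_def Tr_def frob pow_q0_q0)

lemma card_T: "card Tset \<le> q0"
proof -
  have "Tset = {x. x ^ q0 + (-1) * x + 0 = 0}" by (auto simp: Tset_def)
  then show ?thesis using card_roots_trinom[of q0 "-1::'a" 0] q0_ge3 by simp
qed

definition Kset :: "'a set" where "Kset = {x. Tr x = 0}"

lemma card_K_le: "card Kset \<le> q0"
proof -
  have "Kset = {x. x ^ q0 + 1 * x + 0 = 0}" by (auto simp: Kset_def Tr_def)
  then show ?thesis using card_roots_trinom[of q0 "1::'a" 0] q0_ge3 by simp
qed

lemma Tr_fib_le: "card {x. Tr x = t} \<le> card Kset"
proof (cases "\<exists>x0. Tr x0 = t")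
  case False then show ?thesis by simp
next
  case True
  then obtain x0 where x0: "Tr x0 = t" by blast
  have "card {x. Tr x = t} \<le> card Kset"
    by (rule card_inj_on_le[of "\<lambda>x. x - x0"]) (auto simp: inj_on_def Kset_def Tr_diff x0)
  then show ?thesis .
qed

lemma card_K: "card Kset = q0"
proof -
  have "card (UNIV::'a set) = (\<Sum>t\<in>Tset. card {x\<in>UNIV. Tr x = t})"
    using sum.group[of UNIV Tset Tr "\<lambda>_. 1::nat"] Tr_in_T by (simp add: image_subset_iff)
  also have "\<dots> \<le> (\<Sum>t\<in>Tset. card Kset)" by (intro sum_mono) (use Tr_fib_le in simp)
  also have "\<dots> = card Tset * card Kset" by simp
  also have "\<dots> \<le> q0 * card Kset" using card_T by simp
  finally have "q0 * q0 \<le> q0 * card Kset" using card_F by (simp add: power2_eq_square)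
  then have "q0 \<le> card Kset" using q0_ge3 by simp
  then show ?thesis using card_K_le by simp
qed

definition al :: nat where "al = (q0 + 1) div 2"

lemma q0_k: "\<exists>k. q0 = 2*k+1 \<and> al = k + 1"
proof -
  obtain k where k: "q0 = 2*k+1" using q0_odd oddE by blast
  then have "al = k + 1" unfolding al_def by simp
  then show ?thesis using k by blast
qed

lemma q0_al: "q0 = 2 * al - 1" using q0_k by auto
lemma al_ge2: "al \<ge> 2" using q0_ge3 q0_al by simp

lemma q_minus1: "q - 1 = 2 * (al * (q0 - 1))"
proof -
  obtain k where k: "q0 = 2*k+1" "al = k + 1" using q0_k by blast
  have "(2*k+1)^2 - 1 = 2 * ((k+1) * (2*k))" by (simp add: power2_eq_square algebra_simps)
  then show ?thesis using k by simp
qed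

definition ee :: nat where "ee = al * (q0 - 1)"

definition Sq :: "'a set" where "Sq = (\<lambda>z. z ^ 2) ` (UNIV - {0})"
definition Uset :: "'a set" where "Uset = {y. y \<noteq> 0 \<and> y ^ ee = 1}"

lemma card_Sq: "2 * card Sq = q - 1"
proof -
  have fin: "finite (UNIV - {0::'a})" by simp
  have img: "(\<lambda>z. z^2) ` (UNIV - {0::'a}) \<subseteq> Sq" by (simp add: Sq_def)
  have "card (UNIV - {0::'a}) = (\<Sum>t\<in>Sq. card {z\<in>UNIV - {0}. z ^ 2 = t})"
    by (rule card_fibers[OF fin _ img]) simp
  also have "\<dots> = (\<Sum>t\<in>Sq. 2)"
  proof (rule sum.cong[OF refl])
    fix t assume "t \<in> Sq"
    then obtain z where z: "z \<noteq> 0" "t = z^2" by (auto simp: Sq_def)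
    have e: "{w\<in>UNIV - {0}. w ^ 2 = t} = {z, -z}"
    proof -
      have "w ^ 2 = z ^ 2 \<longleftrightarrow> w = z \<or> w = -z" for w :: 'a
        by (rule power2_eq_iff)
      then show ?thesis using z by auto
    qed
    have "z \<noteq> -z"
    proof
      assume h: "z = -z"
      have "z + z = 0" using h by (metis add.right_inverse)
      then have "2 * z = 0" by (metis mult_2)
      then show False using z(1) two_ne0 by (metis mult_eq_0_iff)
    qed
    then show "card {w\<in>UNIV - {0}. w ^ 2 = t} = 2" unfolding e by simp
  qed
  also have "\<dots> = 2 * card Sq" by simp
  finally have "card (UNIV - {0::'a}) = 2 * card Sq" .
  moreover have "card (UNIV - {0::'a}) = q - 1" using card_F by (simp add: card_Diff_singleton)
  ultimately show ?thesis by simp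
qed

lemma card_U_le: "card Uset \<le> ee"
proof -
  have "ee \<ge> 1" using al_ge2 q0_ge3 by (simp add: ee_def)
  have "card Uset \<le> card {y. y ^ ee = (1::'a)}" by (rule card_mono) (auto simp: Uset_def)
  also have "\<dots> \<le> ee" using card_roots_pow \<open>ee \<ge> 1\<close> by blast
  finally show ?thesis .
qed

lemma Sq_sub_U: "Sq \<subseteq> Uset"
proof
  fix t assume "t \<in> Sq"
  then obtain z where z: "z \<noteq> 0" "t = z^2" by (auto simp: Sq_def)
  have "t ^ ee = z ^ (2 * ee)" using z by (simp add: power_mult)
  also have "2 * ee = q - 1" using q_minus1 by (simp add: ee_def)
  finally show "t \<in> Uset" using fermat[OF z(1)] z by (simp add: Uset_def)
qed

lemma Sq_eq_U: "Sq = Uset" and card_U: "card Uset = ee"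
proof -
  have "2 * ee = q - 1" using q_minus1 by (simp add: ee_def)
  then have "card Sq = ee" using card_Sq by simp
  moreover have "card Sq \<le> card Uset" using Sq_sub_U by (intro card_mono) auto
  ultimately have "card Uset = ee" using card_U_le by simp
  then show "card Uset = ee" .
  show "Sq = Uset" using Sq_sub_U \<open>card Sq = ee\<close> \<open>card Uset = ee\<close>
    by (intro card_subset_eq) auto
qed

lemma two_pow_q0: "(2::'a) ^ q0 = 2"
  using frob[of 1 1] by simp

lemma sqrt2: "\<exists>\<sigma>::'a. \<sigma> ^ 2 = 2"
proof -
  have "q0 = Suc (q0 - 1)" using q0_ge3 by simp
  then have "(2::'a) ^ q0 = 2 ^ (q0 - 1) * 2" by (metis power_Suc2)
  then have h: "(2::'a) ^ (q0 - 1) = 1" using two_pow_q0 two_ne0 by simp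
  have "(2::'a) ^ ee = (2 ^ (q0 - 1)) ^ al" by (simp add: ee_def power_mult[symmetric] mult.commute)
  then have "(2::'a) \<in> Uset" using h two_ne0 by (simp add: Uset_def)
  then have "(2::'a) \<in> Sq" using Sq_eq_U by simp
  then obtain z where "(2::'a) = z ^ 2" unfolding Sq_def by (rule imageE)
  then show ?thesis by metis
qed

lemma T_pow: "t \<in> Tset \<Longrightarrow> t \<noteq> 0 \<Longrightarrow> t ^ (q0 - 1) = 1"
proof -
  assume t: "t \<in> Tset" "t \<noteq> 0"
  have "q0 = Suc (q0 - 1)" using q0_ge3 by simp
  then have "t ^ q0 = t ^ (q0 - 1) * t" by (metis power_Suc2)
  then show ?thesis using t by (simp add: Tset_def)
qed

lemma al_q0: "al * q0 = al + ee"
proof -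
  have "al * q0 = al * (Suc (q0 - 1))" using q0_ge3 by simp
  then show ?thesis by (simp add: ee_def)
qed

lemma fib_char: "t \<in> Tset \<Longrightarrow> t \<noteq> 0 \<Longrightarrow> {y. y ^ al = t} = {y\<in>Uset. y ^ al = t}"
proof -
  assume t: "t \<in> Tset" "t \<noteq> 0"
  have "y \<in> Uset" if "y ^ al = t" for y
  proof -
    have "y \<noteq> 0" using t that al_ge2 by auto
    moreover have "y ^ ee = (y ^ al) ^ (q0 - 1)" by (simp add: ee_def power_mult)
    ultimately show ?thesis using T_pow[OF t] that by (simp add: Uset_def)
  qed
  then show ?thesis by auto
qed

lemma card_fib: "t \<in> Tset \<Longrightarrow> t \<noteq> 0 \<Longrightarrow> card {y. y ^ al = t} = al"
proof -
  assume t: "t \<in> Tset" "t \<noteq> 0"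
  have img: "(\<lambda>y. y ^ al) ` Uset \<subseteq> Tset - {0}"
  proof
    fix z assume "z \<in> (\<lambda>y. y ^ al) ` Uset"
    then obtain y where y: "y \<in> Uset" "z = y ^ al" by blast
    have "z ^ q0 = y ^ (al * q0)" using y by (simp add: power_mult)
    also have "\<dots> = y ^ al * y ^ ee" by (simp add: al_q0 power_add)
    also have "\<dots> = z" using y by (simp add: Uset_def)
    finally show "z \<in> Tset - {0}" using y by (simp add: Tset_def Uset_def)
  qed
  have cB: "card (Tset - {0}) \<le> q0 - 1"
  proof -
    have "(0::'a) \<in> Tset" using q0_ge3 by (simp add: Tset_def zero_power)
    then have "card (Tset - {0}) = card Tset - 1" by (simp add: card_Diff_singleton)
    then show ?thesis using card_T by simp
  qed
  have "card {y\<in>Uset. y ^ al = t} = al"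
  proof (rule fiber_count[OF _ _ img cB, of al])
    show "\<And>y. y \<in> Tset - {0} \<Longrightarrow> card {x \<in> Uset. x ^ al = y} \<le> al"
    proof -
      fix y :: 'a
      have "card {x \<in> Uset. x ^ al = y} \<le> card {x. x ^ al = y}" by (rule card_mono) auto
      also have "\<dots> \<le> al" by (rule card_roots_pow) (use al_ge2 in simp)
      finally show "card {x \<in> Uset. x ^ al = y} \<le> al" .
    qed
    show "card Uset = al * (q0 - 1)" using card_U by (simp add: ee_def)
    show "t \<in> Tset - {0}" using t by simp
  qed auto
  then show ?thesis using fib_char[OF t] by simp
qed

lemma one_T: "(1::'a) \<in> Tset" by (simp add: Tset_def)

lemma exists_root: "0 < J \<Longrightarrow> J < al \<Longrightarrow> \<exists>z::'a. z ^ al = 1 \<and> z ^ J \<noteq> 1"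
proof (rule ccontr)
  assume J: "0 < J" "J < al" and n: "\<not> (\<exists>z::'a. z ^ al = 1 \<and> z ^ J \<noteq> 1)"
  have "{z::'a. z ^ al = 1} \<subseteq> {z. z ^ J = 1}" using n by auto
  then have "card {z::'a. z ^ al = 1} \<le> card {z::'a. z ^ J = 1}" by (intro card_mono) auto
  also have "\<dots> \<le> J" by (rule card_roots_pow) (use J in simp)
  finally show False using card_fib[OF one_T] J by simp
qed

lemma fib_sum0:
  assumes t: "t \<in> Tset" "t \<noteq> 0" and J: "0 < J" "J < al"
  shows "(\<Sum>y\<in>{y. y ^ al = t}. y ^ J) = 0"
proof -
  obtain z :: 'a where z: "z ^ al = 1" "z ^ J \<noteq> 1" using exists_root J by blast
  have z0: "z \<noteq> 0" using z al_ge2 by (metis power_0_left zero_neq_one not_numeral_le_zero le_zero_eq not_gr_zero)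
  let ?F = "{y. y ^ al = t}"
  have "(\<Sum>y\<in>?F. (z * y) ^ J) = (\<Sum>y\<in>?F. y ^ J)"
    by (rule sum.reindex_bij_witness[of _ "\<lambda>y. y / z" "\<lambda>y. z * y"])
       (use z z0 in \<open>auto simp: power_mult_distrib power_divide\<close>)
  then have "z ^ J * (\<Sum>y\<in>?F. y ^ J) = (\<Sum>y\<in>?F. y ^ J)"
    by (simp add: power_mult_distrib sum_distrib_left)
  then have "(z ^ J - 1) * (\<Sum>y\<in>?F. y ^ J) = 0" by (simp add: algebra_simps)
  then show ?thesis using z by simp
qed

lemma pow_sum0: "I < q - 1 \<Longrightarrow> (\<Sum>x\<in>(UNIV::'a set). x ^ I) = 0"
proof (cases "I = 0")
  case True
  then show ?thesis using of_nat_card by simp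
next
  case False
  assume I: "I < q - 1"
  have "\<exists>a::'a. a \<noteq> 0 \<and> a ^ I \<noteq> 1"
  proof (rule ccontr)
    assume n: "\<not> (\<exists>a::'a. a \<noteq> 0 \<and> a ^ I \<noteq> 1)"
    have "UNIV - {0::'a} \<subseteq> {z. z ^ I = 1}" using n by auto
    then have "card (UNIV - {0::'a}) \<le> card {z::'a. z ^ I = 1}" by (intro card_mono) auto
    also have "\<dots> \<le> I" by (rule card_roots_pow) (use False in simp)
    finally show False using I card_F by (simp add: card_Diff_singleton)
  qed
  then obtain a :: 'a where a: "a \<noteq> 0" "a ^ I \<noteq> 1" by blast
  have "(\<Sum>x\<in>(UNIV::'a set). (a * x) ^ I) = (\<Sum>x\<in>UNIV. x ^ I)"
    by (rule sum.reindex_bij_witness[of _ "\<lambda>y. y / a" "\<lambda>y. a * y"]) (use a in auto)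
  then have "a ^ I * (\<Sum>x\<in>(UNIV::'a set). x ^ I) = (\<Sum>x\<in>UNIV. x ^ I)"
    by (simp add: power_mult_distrib sum_distrib_left)
  then have "(a ^ I - 1) * (\<Sum>x\<in>(UNIV::'a set). x ^ I) = 0" by (simp add: algebra_simps)
  then show ?thesis using a by simp
qed

end

lemma double_sum_int: "2 * (\<Sum>j<n. int j) = int n * (int n - 1)"
  by (induction n) (simp_all add: algebra_simps)

context hfield
begin

definition wt :: "nat \<times> nat \<Rightarrow> nat" where "wt z = al * fst z + q0 * snd z"

definition Mset :: "nat \<Rightarrow> (nat \<times> nat) set" where
  "Mset D = {z. snd z < al \<and> wt z \<le> D}"

lemma coprime_al_q0: "coprime al q0"
proof -
  have "q0 + 1 = 2 * al" using q0_al al_ge2 by simp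
  show ?thesis
  proof (rule coprimeI)
    fix c assume "c dvd al" "c dvd q0"
    then have "c dvd 2 * al" "c dvd q0" by auto
    then have "c dvd (2 * al - q0)" by (rule dvd_diff_nat)
    moreover have "2 * al - q0 = 1" using \<open>q0 + 1 = 2 * al\<close> by simp
    ultimately show "is_unit c" by simp
  qed
qed

lemma wt_inj:
  assumes "snd a < al" "snd b < al" "wt a = wt b"
  shows "a = b"
proof -
  obtain i j i' j' where a: "a = (i,j)" and b: "b = (i',j')" by (cases a, cases b) auto
  have n: "al * i + q0 * j = al * i' + q0 * j'" using assms(3) unfolding a b wt_def by simp
  have "int (al * i + q0 * j) = int (al * i' + q0 * j')" using n by (rule arg_cong)
  then have n2: "int al * int i + int q0 * int j = int al * int i' + int q0 * int j'" by simp
  have e: "int al * (int i - int i') = int q0 * (int j' - int j)"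
    using n2 by (simp add: right_diff_distrib)
  have "int al dvd int q0 * (int j' - int j)" using e by (metis dvd_triv_left)
  moreover have "coprime (int al) (int q0)" using coprime_al_q0 by simp
  ultimately have "int al dvd (int j' - int j)" using coprime_dvd_mult_right_iff by blast
  moreover have "\<bar>int j' - int j\<bar> < int al" using assms(1,2) a b by auto
  ultimately have "int j' - int j = 0"
  proof -
    assume d: "int al dvd (int j' - int j)" and l: "\<bar>int j' - int j\<bar> < int al"
    show ?thesis
    proof (rule ccontr)
      assume "int j' - int j \<noteq> 0"
      from dvd_imp_le_int[OF this d] l show False by simp
    qed
  qed
  then have "j = j'" by simp
  then have "i = i'" using e al_ge2 by simp
  then show ?thesis using a b \<open>j = j'\<close> by simp
qed

lemma finite_Mset: "finite (Mset D)"
proof -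
  have "Mset D \<subseteq> {..D} \<times> {..<al}"
  proof
    fix z assume "z \<in> Mset D"
    then have "snd z < al" "al * fst z + q0 * snd z \<le> D" by (auto simp: Mset_def wt_def)
    moreover have "fst z \<le> al * fst z" using al_ge2 by simp
    ultimately have "fst z \<le> D" by linarith
    with \<open>snd z < al\<close> show "z \<in> {..D} \<times> {..<al}" by (cases z) auto
  qed
  then show ?thesis by (rule finite_subset) auto
qed

lemma Mset_mono: "D \<le> D' \<Longrightarrow> Mset D \<subseteq> Mset D'"
  by (auto simp: Mset_def)

lemma card_Mset_step: "D' \<le> D \<Longrightarrow> card (Mset D) \<le> card (Mset D') + (D - D')"
proof -
  assume le: "D' \<le> D"
  let ?X = "{z \<in> Mset D. D' < wt z}"
  have "Mset D \<subseteq> Mset D' \<union> ?X" by (auto simp: Mset_def)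
  then have "card (Mset D) \<le> card (Mset D' \<union> ?X)" by (intro card_mono) (use finite_Mset in auto)
  also have "\<dots> \<le> card (Mset D') + card ?X" by (rule card_Un_le)
  also have "card ?X \<le> card {D'<..D}"
  proof (rule card_inj_on_le[of wt])
    show "inj_on wt ?X" unfolding inj_on_def Mset_def using wt_inj by blast
    show "wt ` ?X \<subseteq> {D'<..D}" by (auto simp: Mset_def)
  qed auto
  finally show ?thesis by simp
qed

lemma card_i: "card {i. al * i \<le> X} = X div al + 1"
proof -
  have "{i. al * i \<le> X} = {..X div al}"
    using al_ge2 by (auto simp: less_eq_div_iff_mult_less_eq mult.commute)
  then show ?thesis by simp
qed

lemma card_Mset_sum: "card (Mset D) = (\<Sum>j<al. card {i. al * i + q0 * j \<le> D})"
proof -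
  have "Mset D = (\<lambda>(j,i). (i,j)) ` (SIGMA j:{..<al}. {i. al * i + q0 * j \<le> D})"
    by (auto simp: Mset_def wt_def image_iff)
  moreover have "inj_on (\<lambda>(j,i). (i,j)) (SIGMA j:{..<al}. {i. al * i + q0 * j \<le> D})"
    by (auto simp: inj_on_def)
  ultimately have "card (Mset D) = card (SIGMA j:{..<al}. {i. al * i + q0 * j \<le> D})"
    by (simp add: card_image)
  also have "\<dots> = (\<Sum>j<al. card {i. al * i + q0 * j \<le> D})"
  proof (rule card_SigmaI)
    show "\<forall>j\<in>{..<al}. finite {i. al * i + q0 * j \<le> D}"
    proof
      fix j
      have "{i. al * i + q0 * j \<le> D} \<subseteq> {..D}"
      proof
        fix i assume "i \<in> {i. al * i + q0 * j \<le> D}"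
        then have "al * i + q0 * j \<le> D" by simp
        moreover have "i \<le> al * i" using al_ge2 by simp
        ultimately have "i \<le> D" by linarith
        then show "i \<in> {..D}" by simp
      qed
      then show "finite {i. al * i + q0 * j \<le> D}" by (rule finite_subset) auto
    qed
  qed auto
  finally show ?thesis .
qed

lemma card_i_int:
  assumes "int D + int al \<ge> int q0 * int j"
  shows "int (card {i. al * i + q0 * j \<le> D}) = (int D - int q0 * int j) div int al + 1"
proof (cases "q0 * j \<le> D")
  case True
  have "{i. al * i + q0 * j \<le> D} = {i. al * i \<le> D - q0 * j}" using True by auto
  then have "card {i. al * i + q0 * j \<le> D} = (D - q0 * j) div al + 1" using card_i by simp
  then show ?thesis using True by (simp add: zdiv_int of_nat_diff)
next
  case False
  then have "{i. al * i + q0 * j \<le> D} = {}" by auto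
  moreover have "(int D - int q0 * int j) div int al = -1"
  proof -
    have "int D - int q0 * int j < 0" using False by (simp add: of_nat_mult[symmetric] del: of_nat_mult)
    moreover have "int D - int q0 * int j \<ge> - int al" using assms by simp
    ultimately have "0 \<le> (int D - int q0 * int j) + int al" "(int D - int q0 * int j) + int al < int al" by auto
    then have "((int D - int q0 * int j) + int al) div int al = 0" by (rule div_pos_pos_trivial)
    moreover have "((int D - int q0 * int j) + int al) div int al = (int D - int q0 * int j) div int al + 1"
      using al_ge2 by (simp add: div_add_self2)
    ultimately show ?thesis by simp
  qed
  ultimately show ?thesis by simp
qed

definition gg :: nat where "gg = (al - 1)^2"

lemma card_Mset:
  assumes D: "D + 1 \<ge> 2 * gg"
  shows "card (Mset D) = D + 1 - gg"
proof -
  obtain A B where AB: "D = al * A + B" "B < al" using al_ge2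
    by (metis div_mult_mod_eq mod_less_divisor mult.commute not_numeral_le_zero not_gr_zero le_zero_eq)
  have q0e: "int q0 = 2 * int al - 1" using q0_al al_ge2 by simp
  have ge: "int gg = (int al - 1)^2" using al_ge2 by (simp add: gg_def of_nat_diff)
  have tm: "(int D - int q0 * int j) div int al + 1 = int A - 2 * int j + 1 + (if al \<le> B + j then 1 else 0)"
    if j: "j < al" for j
  proof -
    have "int D - int q0 * int j = int al * (int A - 2 * int j) + (int B + int j)"
      using AB by (simp add: q0e algebra_simps)
    then have "(int D - int q0 * int j) div int al = (int A - 2 * int j) + (int B + int j) div int al"
      using al_ge2 by simp
    moreover have "(int B + int j) div int al = (if al \<le> B + j then 1 else 0)"
    proof (cases "al \<le> B + j")
      case True
      then have "0 \<le> (int B + int j) - int al" "(int B + int j) - int al < int al" using AB j by auto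
      then have "((int B + int j) - int al) div int al = 0" by (rule div_pos_pos_trivial)
      moreover have "((int B + int j) - int al) div int al = (int B + int j) div int al - 1"
        using div_add_self2[of "int al" "int B + int j - int al"] al_ge2 by simp
      ultimately show ?thesis using True by simp
    next
      case False
      then have "(int B + int j) div int al = 0" by (intro div_pos_pos_trivial) auto
      then show ?thesis using False by simp
    qed
    ultimately show ?thesis by simp
  qed
  have "int (card (Mset D)) = (\<Sum>j<al. int (card {i. al * i + q0 * j \<le> D}))"
    by (simp add: card_Mset_sum)
  also have "\<dots> = (\<Sum>j<al. (int D - int q0 * int j) div int al + 1)"
  proof (rule sum.cong[OF refl])
    fix j assume j: "j \<in> {..<al}"
    have "int q0 * int j \<le> int D + int al"
    proof -
      have "int q0 * int j \<le> int q0 * (int al - 1)" using j q0e al_ge2 by (intro mult_left_mono) auto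
      also have "\<dots> = 2 * (int al - 1)^2 + (int al - 1)" by (simp add: q0e power2_eq_square algebra_simps)
      also have "\<dots> \<le> int D + int al" using D ge by simp
      finally show ?thesis .
    qed
    then show "int (card {i. al * i + q0 * j \<le> D}) = (int D - int q0 * int j) div int al + 1"
      by (intro card_i_int) simp
  qed
  also have "\<dots> = (\<Sum>j<al. int A - 2 * int j + 1 + (if al \<le> B + j then 1 else 0))"
    by (rule sum.cong[OF refl]) (simp add: tm)
  also have "\<dots> = int al * (int A + 1) - 2 * (\<Sum>j<al. int j) + (\<Sum>j<al. (if al \<le> B + j then 1 else 0))"
    by (simp add: sum.distrib sum_subtractf sum_distrib_left algebra_simps)
  also have "(\<Sum>j<al. (if al \<le> B + j then 1 else 0::int)) = int B"
  proof -
    have "(\<Sum>j<al. (if al \<le> B + j then 1 else 0::int)) = int (card {j. j < al \<and> al \<le> B + j})"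
      by (simp add: sum.If_cases Int_def)
    also have "{j. j < al \<and> al \<le> B + j} = {al - B..<al}" using AB by auto
    finally show ?thesis using AB by simp
  qed
  finally have "int (card (Mset D)) = int al * (int A + 1) - int al * (int al - 1) + int B"
    using double_sum_int[of al] by simp
  also have "\<dots> = int D + 1 - int gg" using AB ge by (simp add: power2_eq_square algebra_simps)
  finally have "int (card (Mset D)) = int D + 1 - int gg" .
  then show ?thesis by simp
qed

end

definition Rs :: "'k set \<Rightarrow> ('k \<Rightarrow> 'b::zero) set" where
  "Rs M = {c. \<forall>z. z \<notin> M \<longrightarrow> c z = 0}"

lemma Rs_mono: "M \<subseteq> M' \<Longrightarrow> Rs M \<subseteq> Rs M'"
  by (auto simp: Rs_def)

lemma card_Rs:
  assumes "finite M"
  shows "card (Rs M :: ('k \<Rightarrow> 'b::{zero,finite}) set) = card (UNIV :: 'b set) ^ card M"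
proof -
  have "bij_betw (\<lambda>c. restrict c M) (Rs M :: ('k \<Rightarrow> 'b) set) (M \<rightarrow>\<^sub>E (UNIV :: 'b set))"
  proof (rule bij_betw_byWitness[where f' = "\<lambda>c z. if z \<in> M then c z else 0"])
    show "\<forall>a\<in>Rs M. (\<lambda>z. if z \<in> M then restrict a M z else 0) = a"
      by (auto simp: Rs_def fun_eq_iff)
    show "\<forall>a'\<in>M \<rightarrow>\<^sub>E UNIV. restrict (\<lambda>z. if z \<in> M then a' z else 0) M = a'"
      by (auto simp: fun_eq_iff PiE_def extensional_def)
    show "(\<lambda>c. restrict c M) ` Rs M \<subseteq> M \<rightarrow>\<^sub>E UNIV" by auto
    show "(\<lambda>c z. if z \<in> M then c z else 0) ` (M \<rightarrow>\<^sub>E UNIV) \<subseteq> Rs M"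
      by (auto simp: Rs_def)
  qed
  then have "card (Rs M :: ('k \<Rightarrow> 'b) set) = card (M \<rightarrow>\<^sub>E (UNIV :: 'b set))"
    by (rule bij_betw_same_card)
  also have "\<dots> = card (UNIV :: 'b set) ^ card M" using assms by (rule card_funcsetE)
  finally show ?thesis .
qed

lemma finite_Rs: "finite M \<Longrightarrow> finite (Rs M :: ('k \<Rightarrow> 'b::{zero,finite}) set)"
proof -
  assume M: "finite M"
  have "card (Rs M :: ('k \<Rightarrow> 'b) set) > 0" using card_Rs[OF M, where 'b='b] by (simp add: finite_UNIV_card_ge_0)
  then show ?thesis using card_gt_0_iff by blast
qed

definition ev :: "(nat \<times> nat) set \<Rightarrow> (nat \<times> nat \<Rightarrow> 'a::field) \<Rightarrow> 'a \<times> 'a \<Rightarrow> 'a" where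
  "ev M c P = (\<Sum>z\<in>M. c z * fst P ^ fst z * snd P ^ snd z)"

lemma ev_superset:
  assumes "finite M'" "M \<subseteq> M'" "c \<in> Rs M"
  shows "ev M' c P = ev M c P"
  unfolding ev_def using assms by (intro sum.mono_neutral_right) (auto simp: Rs_def)

definition dl :: "nat \<times> nat \<Rightarrow> nat \<times> nat \<Rightarrow> 'a::field" where
  "dl z = (\<lambda>w. if w = z then 1 else 0)"

lemma ev_dl: "finite M \<Longrightarrow> w \<in> M \<Longrightarrow> ev M (dl w) P = fst P ^ fst w * snd P ^ snd w"
proof -
  assume "finite M" "w \<in> M"
  have "ev M (dl w) P = (\<Sum>z\<in>M. if z = w then fst P ^ fst z * snd P ^ snd z else 0)"
    unfolding ev_def dl_def by (intro sum.cong) auto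
  also have "\<dots> = fst P ^ fst w * snd P ^ snd w" using \<open>finite M\<close> \<open>w \<in> M\<close> by (simp add: sum.delta)
  finally show ?thesis .
qed

lemma ev_add: "ev M (\<lambda>w. f w + g w) P = ev M f P + ev M g P"
  unfolding ev_def by (simp add: sum.distrib algebra_simps)

lemma ev_diff: "ev M (\<lambda>w. f w - g w) P = ev M f P - ev M g P"
  unfolding ev_def by (simp add: sum_subtractf algebra_simps)

lemma ev_smult: "ev M (\<lambda>w. a * f w) P = a * ev M f P"
  unfolding ev_def by (simp add: sum_distrib_left algebra_simps)

lemma ev_sum: "ev M (\<lambda>w. \<Sum>i\<in>I. h i w) P = (\<Sum>i\<in>I. ev M (h i) P)"
  unfolding ev_def by (simp add: sum_distrib_right sum.swap[of _ I])

lemma ev_zero: "ev M (\<lambda>w. 0) P = 0"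
  unfolding ev_def by simp

context hfield
begin

definition Pts :: "('a \<times> 'a) set" where "Pts = {P. snd P ^ al = Tr (fst P)}"

definition rm :: "nat \<times> nat \<Rightarrow> nat \<times> nat \<Rightarrow> 'a" where
  "rm z = (if snd z < al then dl z else (\<lambda>w. dl (fst z + q0, snd z - al) w + dl (fst z + 1, snd z - al) w))"

definition addp :: "nat \<times> nat \<Rightarrow> nat \<times> nat \<Rightarrow> nat \<times> nat" where
  "addp a b = (fst a + fst b, snd a + snd b)"

definition mulr :: "(nat \<times> nat) set \<Rightarrow> (nat \<times> nat) set \<Rightarrow> (nat \<times> nat \<Rightarrow> 'a) \<Rightarrow> (nat \<times> nat \<Rightarrow> 'a) \<Rightarrow> nat \<times> nat \<Rightarrow> 'a" where
  "mulr M1 M2 f g = (\<lambda>w. \<Sum>a\<in>M1. \<Sum>b\<in>M2. f a * g b * rm (addp a b) w)"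

lemma wt_addp: "wt (addp a b) = wt a + wt b"
  by (simp add: wt_def addp_def algebra_simps)

lemma wt_red1: "\<not> snd z < al \<Longrightarrow> wt (fst z + q0, snd z - al) = wt z"
proof -
  assume "\<not> snd z < al"
  then obtain k where k: "snd z = al + k" by (metis le_add_diff_inverse not_less)
  show ?thesis by (simp add: wt_def k algebra_simps)
qed

lemma wt_red2: "\<not> snd z < al \<Longrightarrow> wt (fst z + 1, snd z - al) \<le> wt z"
proof -
  assume "\<not> snd z < al"
  then obtain k where k: "snd z = al + k" by (metis le_add_diff_inverse not_less)
  have "wt (fst z + 1, snd z - al) + al * q0 = wt z + al" by (simp add: wt_def k algebra_simps)
  moreover have "al \<le> al * q0" using q0_ge3 by simp
  ultimately show ?thesis by linarith
qed

lemma rm_in: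
  assumes "snd z < 2 * al"
  shows "rm z \<in> Rs (Mset (wt z))"
proof (cases "snd z < al")
  case True
  then show ?thesis by (auto simp: rm_def Rs_def dl_def Mset_def)
next
  case False
  have q1: "wt (fst z + q0, snd z - al) = wt z" using False wt_red1 by simp
  have q2: "wt (fst z + 1, snd z - al) \<le> wt z" using False wt_red2 by simp
  have "snd z - al < al" using assms False by simp
  then show ?thesis using False q1 q2 by (auto simp: rm_def Rs_def dl_def Mset_def)
qed

lemma ev_rm:
  assumes P: "P \<in> Pts" and z: "snd z < 2 * al"
  shows "ev (Mset (wt z)) (rm z) P = fst P ^ fst z * snd P ^ snd z"
proof (cases "snd z < al")
  case True
  have "z \<in> Mset (wt z)" using True by (simp add: Mset_def)
  then show ?thesis using True by (simp add: rm_def ev_dl finite_Mset)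
next
  case False
  have q1: "wt (fst z + q0, snd z - al) = wt z" using False wt_red1 by simp
  have q2: "wt (fst z + 1, snd z - al) \<le> wt z" using False wt_red2 by simp
  have s: "snd z - al < al" using z False by simp
  have m1: "(fst z + q0, snd z - al) \<in> Mset (wt z)" using q1 s by (simp add: Mset_def)
  have m2: "(fst z + 1, snd z - al) \<in> Mset (wt z)" using q2 s by (simp add: Mset_def)
  have "ev (Mset (wt z)) (rm z) P = fst P ^ (fst z + q0) * snd P ^ (snd z - al) + fst P ^ (fst z + 1) * snd P ^ (snd z - al)"
    using False m1 m2 by (simp add: rm_def ev_add ev_dl finite_Mset)
  also have "\<dots> = fst P ^ fst z * snd P ^ (snd z - al) * Tr (fst P)"
    by (simp add: Tr_def power_add algebra_simps)
  also have "\<dots> = fst P ^ fst z * snd P ^ (snd z - al) * snd P ^ al" using P by (simp add: Pts_def)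
  also have "\<dots> = fst P ^ fst z * snd P ^ snd z" using False
    by (simp add: mult.assoc power_add[symmetric])
  finally show ?thesis .
qed

lemma mulr_in:
  assumes "f \<in> Rs (Mset D1)" "g \<in> Rs (Mset D2)"
  shows "mulr (Mset D1) (Mset D2) f g \<in> Rs (Mset (D1 + D2))"
proof -
  have "rm (addp a b) w = 0" if "a \<in> Mset D1" "b \<in> Mset D2" "w \<notin> Mset (D1 + D2)" for a b w
  proof -
    have "snd (addp a b) < 2 * al" using that by (simp add: addp_def Mset_def)
    then have r: "rm (addp a b) \<in> Rs (Mset (wt (addp a b)))" by (rule rm_in)
    have "Mset (wt (addp a b)) \<subseteq> Mset (D1 + D2)" using that
      by (intro Mset_mono) (simp add: wt_addp Mset_def)
    then have "w \<notin> Mset (wt (addp a b))" using that by blast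
    then show ?thesis using r unfolding Rs_def by blast
  qed
  then show ?thesis by (auto simp: Rs_def mulr_def intro!: sum.neutral)
qed

lemma ev_mulr:
  assumes P: "P \<in> Pts" and f: "f \<in> Rs (Mset D1)" and g: "g \<in> Rs (Mset D2)"
  shows "ev (Mset (D1 + D2)) (mulr (Mset D1) (Mset D2) f g) P = ev (Mset D1) f P * ev (Mset D2) g P"
proof -
  have "ev (Mset (D1 + D2)) (mulr (Mset D1) (Mset D2) f g) P
      = (\<Sum>a\<in>Mset D1. \<Sum>b\<in>Mset D2. f a * g b * ev (Mset (D1 + D2)) (rm (addp a b)) P)"
    unfolding mulr_def by (simp add: ev_sum ev_smult mult.commute mult.left_commute)
  also have "\<dots> = (\<Sum>a\<in>Mset D1. \<Sum>b\<in>Mset D2. f a * g b * (fst P ^ fst a * snd P ^ snd a) * (fst P ^ fst b * snd P ^ snd b))"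
  proof (intro sum.cong refl)
    fix a b assume ab: "a \<in> Mset D1" "b \<in> Mset D2"
    have s: "snd (addp a b) < 2 * al" using ab by (simp add: addp_def Mset_def)
    have "Mset (wt (addp a b)) \<subseteq> Mset (D1 + D2)" using ab
      by (intro Mset_mono) (simp add: wt_addp Mset_def)
    then have "ev (Mset (D1 + D2)) (rm (addp a b)) P = ev (Mset (wt (addp a b))) (rm (addp a b)) P"
      by (intro ev_superset rm_in s finite_Mset)
    also have "\<dots> = fst P ^ fst (addp a b) * snd P ^ snd (addp a b)" by (rule ev_rm[OF P s])
    finally show "f a * g b * ev (Mset (D1 + D2)) (rm (addp a b)) P = f a * g b * (fst P ^ fst a * snd P ^ snd a) * (fst P ^ fst b * snd P ^ snd b)"
      by (simp add: addp_def power_add algebra_simps)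
  qed
  also have "\<dots> = ev (Mset D1) f P * ev (Mset D2) g P"
    unfolding ev_def by (simp add: sum_product algebra_simps)
  finally show ?thesis .
qed

lemma mulr_diff:
  "mulr M1 M2 f (\<lambda>w. g w - g' w) = (\<lambda>w. mulr M1 M2 f g w - mulr M1 M2 f g' w)"
  unfolding mulr_def by (simp add: sum_subtractf algebra_simps fun_eq_iff)

lemma lead_exists:
  assumes "f \<in> Rs (Mset D)" "f \<noteq> (\<lambda>w. 0)"
  shows "\<exists>a0. f a0 \<noteq> 0 \<and> (\<forall>a. f a \<noteq> 0 \<longrightarrow> wt a \<le> wt a0) \<and> (\<forall>a. f a \<noteq> 0 \<longrightarrow> wt a = wt a0 \<longrightarrow> a = a0)"
proof -
  let ?S = "{a. f a \<noteq> 0}"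
  have sub: "?S \<subseteq> Mset D" using assms(1) by (auto simp: Rs_def)
  then have fin: "finite ?S" using finite_Mset finite_subset by blast
  have ne: "?S \<noteq> {}" using assms(2) by auto
  let ?W = "Max (wt ` ?S)"
  have "?W \<in> wt ` ?S" using fin ne by (intro Max_in) auto
  then obtain a0 where a0: "f a0 \<noteq> 0" "wt a0 = ?W" by auto
  have le: "wt a \<le> wt a0" if "f a \<noteq> 0" for a using that fin a0 by (simp add: Max_ge)
  have eq: "a = a0" if "f a \<noteq> 0" "wt a = wt a0" for a
    using wt_inj[of a a0] that sub a0 by (auto simp: Mset_def)
  show ?thesis using a0 le eq by blast
qed

lemma double_sum_single:
  assumes "finite A" "finite B" "a0 \<in> A" "b0 \<in> B"
    and "\<And>a b. a \<in> A \<Longrightarrow> b \<in> B \<Longrightarrow> (a, b) \<noteq> (a0, b0) \<Longrightarrow> F a b = (0::'b::comm_monoid_add)"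
  shows "(\<Sum>a\<in>A. \<Sum>b\<in>B. F a b) = F a0 b0"
proof -
  have "(\<Sum>a\<in>A. \<Sum>b\<in>B. F a b) = (\<Sum>a\<in>A. if a = a0 then F a0 b0 else 0)"
  proof (rule sum.cong[OF refl])
    fix a assume a: "a \<in> A"
    show "(\<Sum>b\<in>B. F a b) = (if a = a0 then F a0 b0 else 0)"
    proof (cases "a = a0")
      case True
      have "(\<Sum>b\<in>B. F a b) = F a b0 + (\<Sum>b\<in>B - {b0}. F a b)"
        using assms(2,4) by (rule sum.remove)
      also have "(\<Sum>b\<in>B - {b0}. F a b) = 0" using assms(5) a True by (intro sum.neutral) auto
      finally show ?thesis using True by simp
    next
      case False
      then show ?thesis using assms(5) a by (simp add: sum.neutral)
    qed
  qed
  also have "\<dots> = F a0 b0" using assms(1,3) by (simp add: sum.delta')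
  finally show ?thesis .
qed

lemma mulr_nonzero:
  assumes f: "f \<in> Rs (Mset D1)" and g: "g \<in> Rs (Mset D2)"
    and f0: "f \<noteq> (\<lambda>w. 0)" and g0: "g \<noteq> (\<lambda>w. 0)"
  shows "mulr (Mset D1) (Mset D2) f g \<noteq> (\<lambda>w. 0)"
proof -
  obtain a0 where a0: "f a0 \<noteq> 0" "\<And>a. f a \<noteq> 0 \<Longrightarrow> wt a \<le> wt a0" "\<And>a. f a \<noteq> 0 \<Longrightarrow> wt a = wt a0 \<Longrightarrow> a = a0"
    using lead_exists[OF f f0] by blast
  obtain b0 where b0: "g b0 \<noteq> 0" "\<And>b. g b \<noteq> 0 \<Longrightarrow> wt b \<le> wt b0" "\<And>b. g b \<noteq> 0 \<Longrightarrow> wt b = wt b0 \<Longrightarrow> b = b0"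
    using lead_exists[OF g g0] by blast
  have a0M: "a0 \<in> Mset D1" using f a0(1) unfolding Rs_def by blast
  have b0M: "b0 \<in> Mset D2" using g b0(1) unfolding Rs_def by blast
  define t where "t = addp a0 b0"
  define \<rho> where "\<rho> = (if snd t < al then t else (fst t + q0, snd t - al))"
  have wr: "wt \<rho> = wt t" unfolding \<rho>_def using wt_red1[of t] by auto
  have rt: "rm t \<rho> = 1"
  proof (cases "snd t < al")
    case True then show ?thesis by (simp add: \<rho>_def rm_def dl_def)
  next
    case False
    have "(fst t + 1, snd t - al) \<noteq> (fst t + q0, snd t - al)" using q0_ge3 by simp
    then show ?thesis using False by (simp add: \<rho>_def rm_def dl_def)
  qed
  have "mulr (Mset D1) (Mset D2) f g \<rho> = f a0 * g b0 * rm (addp a0 b0) \<rho>"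
    unfolding mulr_def
  proof (rule double_sum_single[OF finite_Mset finite_Mset a0M b0M])
    fix a b assume ab: "a \<in> Mset D1" "b \<in> Mset D2" "(a, b) \<noteq> (a0, b0)"
    show "f a * g b * rm (addp a b) \<rho> = 0"
    proof (rule ccontr)
      assume nz: "f a * g b * rm (addp a b) \<rho> \<noteq> 0"
      then have fa: "f a \<noteq> 0" and gb: "g b \<noteq> 0" and r: "rm (addp a b) \<rho> \<noteq> 0" by auto
      have "wt a + wt b < wt a0 + wt b0"
      proof -
        have "wt a \<le> wt a0" "wt b \<le> wt b0" using a0(2)[OF fa] b0(2)[OF gb] .
        moreover have "\<not> (wt a = wt a0 \<and> wt b = wt b0)" using a0(3)[OF fa] b0(3)[OF gb] ab(3) by auto
        ultimately show ?thesis by linarith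
      qed
      moreover have "snd (addp a b) < 2 * al" using ab by (simp add: addp_def Mset_def)
      then have "rm (addp a b) \<in> Rs (Mset (wt (addp a b)))" by (rule rm_in)
      then have "\<rho> \<in> Mset (wt (addp a b))" using r unfolding Rs_def by blast
      then have "wt \<rho> \<le> wt a + wt b" by (simp add: Mset_def wt_addp)
      ultimately show False using wr by (simp add: t_def wt_addp)
    qed
  qed
  also have "\<dots> \<noteq> 0" using a0(1) b0(1) rt by (simp add: t_def)
  finally show ?thesis by (metis)
qed

end

lemma poly_sum_N:
  fixes p :: "'a::field poly"
  assumes "degree p \<le> N"
  shows "poly p x = (\<Sum>i\<le>N. coeff p i * x ^ i)"
proof -
  have "poly p x = (\<Sum>i\<le>degree p. coeff p i * x ^ i)" by (rule poly_altdef)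
  also have "\<dots> = (\<Sum>i\<le>N. coeff p i * x ^ i)"
    using assms by (intro sum.mono_neutral_left) (auto simp: coeff_eq_0)
  finally show ?thesis .
qed

context hfield
begin

definition DI :: nat where "DI = al * (q - 1) + q0 * (al - 1)"

lemma interp:
  assumes P0: "P0 \<in> Pts"
  shows "\<exists>L. L \<in> Rs (Mset DI) \<and> (\<forall>P\<in>Pts. ev (Mset DI) L P = (if P = P0 then 1 else 0))"
proof -
  obtain x0 y0 where xy: "P0 = (x0, y0)" by (cases P0)
  define A :: "'a poly" where "A = 1 - [:-x0, 1:] ^ (q - 1)"
  have q1: "q - 1 \<ge> 1" using q_pos by simp
  have polyA: "poly A x = (if x = x0 then 1 else 0)" for x
  proof (cases "x = x0")
    case True then show ?thesis using q1 by (simp add: A_def zero_power)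
  next
    case False
    then have "(x - x0) ^ (q - 1) = 1" by (intro fermat) simp
    then show ?thesis using False by (simp add: A_def)
  qed
  have degA: "degree A \<le> q - 1"
  proof -
    have "degree ([:-x0, 1:] ^ (q - 1)) \<le> q - 1"
      using degree_power_le[of "[:-x0, 1:]" "q - 1"] by simp
    then show ?thesis unfolding A_def using degree_diff_le_max[of 1 "[:-x0, 1:] ^ (q - 1)"] by simp
  qed
  define Y where "Y = {y::'a. y ^ al = Tr x0}"
  have y0Y: "y0 \<in> Y" using P0 xy by (simp add: Y_def Pts_def)
  have cY: "card Y \<le> al" unfolding Y_def by (rule card_roots_pow) (use al_ge2 in simp)
  define Y' where "Y' = Y - {y0}"
  have cY': "card Y' \<le> al - 1" using cY y0Y by (simp add: Y'_def card_Diff_singleton)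
  define c where "c = (\<Prod>y1\<in>Y'. y0 - y1)"
  have c0: "c \<noteq> 0" unfolding c_def Y'_def by (simp add: prod_zero_iff)
  define B :: "'a poly" where "B = smult (inverse c) (\<Prod>y1\<in>Y'. [:-y1, 1:])"
  have degB: "degree B \<le> al - 1"
  proof -
    have "degree (\<Prod>y1\<in>Y'. [:-y1, 1:]) \<le> (\<Sum>y1\<in>Y'. degree [:-y1, 1:])"
      using degree_prod_sum_le[of Y' "\<lambda>y1. [:-y1, 1:]"] by (simp add: o_def)
    also have "\<dots> = card Y'" by simp
    finally show ?thesis using cY' by (simp add: B_def)
  qed
  have polyB: "poly B y = inverse c * (\<Prod>y1\<in>Y'. y - y1)" for y
    by (simp add: B_def poly_prod)
  define L where "L = (\<lambda>z. coeff A (fst z) * coeff B (snd z))"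
  define Bx where "Bx = {..q - 1} \<times> {..al - 1}"
  have LBx: "L \<in> Rs Bx"
  proof -
    have "L z = 0" if "z \<notin> Bx" for z
    proof -
      have "fst z > q - 1 \<or> snd z > al - 1" using that unfolding Bx_def by (cases z) auto
      then have "coeff A (fst z) = 0 \<or> coeff B (snd z) = 0" using degA degB by (auto intro!: coeff_eq_0)
      then show ?thesis by (auto simp: L_def)
    qed
    then show ?thesis by (simp add: Rs_def)
  qed
  have BxM: "Bx \<subseteq> Mset DI"
  proof
    fix z assume "z \<in> Bx"
    then have z: "fst z \<le> q - 1" "snd z \<le> al - 1" by (auto simp: Bx_def)
    have "snd z < al" using z al_ge2 by simp
    moreover have "al * fst z + q0 * snd z \<le> DI" unfolding DI_def
      using z by (intro add_mono mult_left_mono) auto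
    ultimately show "z \<in> Mset DI" by (simp add: Mset_def wt_def)
  qed
  have LM: "L \<in> Rs (Mset DI)" using LBx BxM Rs_mono by blast
  have evL: "ev (Mset DI) L P = poly A (fst P) * poly B (snd P)" for P
  proof -
    have "ev (Mset DI) L P = ev Bx L P" by (rule ev_superset[OF finite_Mset BxM LBx])
    also have "\<dots> = (\<Sum>i\<le>q - 1. \<Sum>j\<le>al - 1. coeff A i * fst P ^ i * (coeff B j * snd P ^ j))"
      unfolding ev_def Bx_def L_def by (simp add: sum.cartesian_product algebra_simps split_def)
    also have "\<dots> = (\<Sum>i\<le>q - 1. coeff A i * fst P ^ i) * (\<Sum>j\<le>al - 1. coeff B j * snd P ^ j)"
      by (simp add: sum_product)
    also have "\<dots> = poly A (fst P) * poly B (snd P)"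
      using poly_sum_N[OF degA] poly_sum_N[OF degB] by simp
    finally show ?thesis .
  qed
  have "ev (Mset DI) L P = (if P = P0 then 1 else 0)" if P: "P \<in> Pts" for P
  proof -
    obtain x y where P': "P = (x, y)" by (cases P)
    show ?thesis
    proof (cases "x = x0")
      case False
      then show ?thesis using evL P' xy polyA by simp
    next
      case True
      then have yY: "y \<in> Y" using P P' by (simp add: Pts_def Y_def)
      show ?thesis
      proof (cases "y = y0")
        case True
        then show ?thesis using evL P' xy polyA polyB c0 \<open>x = x0\<close> by (simp add: c_def)
      next
        case False
        then have "y \<in> Y'" using yY by (simp add: Y'_def)
        then have "(\<Prod>y1\<in>Y'. y - y1) = 0" by (simp add: prod_zero_iff Y'_def Y_def)
        then show ?thesis using evL P' xy polyA polyB False \<open>x = x0\<close> by simp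
      qed
    qed
  qed
  then show ?thesis using LM by blast
qed

lemma Rs_sum: "finite I \<Longrightarrow> (\<And>i. i \<in> I \<Longrightarrow> h i \<in> Rs M) \<Longrightarrow> (\<lambda>w. \<Sum>i\<in>I. h i w) \<in> Rs M"
  by (auto simp: Rs_def intro!: sum.neutral)

lemma zero_count:
  assumes f: "f \<in> Rs (Mset W)" and f0: "f \<noteq> (\<lambda>w. 0)" and Z: "Z \<subseteq> Pts"
    and vz: "\<And>P. P \<in> Z \<Longrightarrow> ev (Mset W) f P = 0"
  shows "card Z \<le> W"
proof -
  obtain Lf where Lf: "\<And>P0. P0 \<in> Pts \<Longrightarrow> Lf P0 \<in> Rs (Mset DI) \<and> (\<forall>P\<in>Pts. ev (Mset DI) (Lf P0) P = (if P = P0 then 1 else 0))"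
  proof -
    have "\<forall>P0\<in>Pts. \<exists>L. L \<in> Rs (Mset DI) \<and> (\<forall>P\<in>Pts. ev (Mset DI) L P = (if P = P0 then 1 else 0))"
      using interp by blast
    then obtain Lf where "\<forall>P0\<in>Pts. Lf P0 \<in> Rs (Mset DI) \<and> (\<forall>P\<in>Pts. ev (Mset DI) (Lf P0) P = (if P = P0 then 1 else 0))"
      by (rule bchoice[elim_format]) blast
    then show ?thesis using that by blast
  qed
  define D where "D = W + DI"
  have finZ: "finite Z" by simp
  define \<Phi> where "\<Phi> = (\<lambda>(g, v). (\<lambda>w. mulr (Mset W) (Mset DI) f g w + (\<Sum>P\<in>Z. v P * Lf P w)))"
  let ?Dom = "(Rs (Mset DI) :: (nat \<times> nat \<Rightarrow> 'a) set) \<times> (Z \<rightarrow>\<^sub>E (UNIV::'a set))"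
  have LfD: "Lf P \<in> Rs (Mset D)" if "P \<in> Z" for P
    using Lf[of P] that Z Rs_mono[OF Mset_mono[of DI D]] by (auto simp: D_def)
  have into: "\<Phi> ` ?Dom \<subseteq> Rs (Mset D)"
  proof
    fix u assume "u \<in> \<Phi> ` ?Dom"
    then obtain g v where gv: "g \<in> Rs (Mset DI)" "u = \<Phi> (g, v)" by auto
    have m: "mulr (Mset W) (Mset DI) f g \<in> Rs (Mset D)" unfolding D_def by (rule mulr_in[OF f gv(1)])
    have s: "(\<lambda>w. \<Sum>P\<in>Z. v P * Lf P w) \<in> Rs (Mset D)"
      using LfD by (intro Rs_sum finZ) (auto simp: Rs_def)
    show "u \<in> Rs (Mset D)" using m s gv(2) by (auto simp: \<Phi>_def Rs_def)
  qed
  have evPhi: "ev (Mset D) (\<Phi> (g, v)) P = v P" if g: "g \<in> Rs (Mset DI)" and P: "P \<in> Z" for g v P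
  proof -
    have PP: "P \<in> Pts" using P Z by auto
    have "ev (Mset D) (\<Phi> (g, v)) P = ev (Mset D) (mulr (Mset W) (Mset DI) f g) P + (\<Sum>P'\<in>Z. v P' * ev (Mset D) (Lf P') P)"
      by (simp add: \<Phi>_def ev_add ev_sum ev_smult)
    also have "ev (Mset D) (mulr (Mset W) (Mset DI) f g) P = 0"
      unfolding D_def using ev_mulr[OF PP f g] vz[OF P] by simp
    also have "(\<Sum>P'\<in>Z. v P' * ev (Mset D) (Lf P') P) = (\<Sum>P'\<in>Z. if P' = P then v P' else 0)"
    proof (rule sum.cong[OF refl])
      fix P' assume P': "P' \<in> Z"
      have "ev (Mset D) (Lf P') P = ev (Mset DI) (Lf P') P"
        using Lf[of P'] P' Z by (intro ev_superset finite_Mset Mset_mono) (auto simp: D_def)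
      also have "\<dots> = (if P = P' then 1 else 0)" using Lf[of P'] P' Z PP by auto
      finally show "v P' * ev (Mset D) (Lf P') P = (if P' = P then v P' else 0)" by auto
    qed
    also have "\<dots> = v P" using P finZ by (simp add: sum.delta)
    finally show ?thesis by simp
  qed
  have inj: "inj_on \<Phi> ?Dom"
  proof (rule inj_onI)
    fix x y assume x: "x \<in> ?Dom" and y: "y \<in> ?Dom" and e: "\<Phi> x = \<Phi> y"
    obtain g v where xg: "x = (g, v)" by (cases x)
    obtain g' v' where yg: "y = (g', v')" by (cases y)
    have g: "g \<in> Rs (Mset DI)" and v: "v \<in> Z \<rightarrow>\<^sub>E UNIV" using x xg by auto
    have g': "g' \<in> Rs (Mset DI)" and v': "v' \<in> Z \<rightarrow>\<^sub>E UNIV" using y yg by auto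
    have vv: "v = v'"
    proof (rule PiE_ext[OF v v'])
      fix P assume "P \<in> Z"
      then show "v P = v' P" using evPhi[OF g, of P v] evPhi[OF g', of P v'] e xg yg by simp
    qed
    have "mulr (Mset W) (Mset DI) f g = mulr (Mset W) (Mset DI) f g'"
    proof
      fix w
      have "\<Phi> (g, v) w = \<Phi> (g', v) w" using e xg yg vv by simp
      then show "mulr (Mset W) (Mset DI) f g w = mulr (Mset W) (Mset DI) f g' w" by (simp add: \<Phi>_def)
    qed
    then have "mulr (Mset W) (Mset DI) f (\<lambda>w. g w - g' w) = (\<lambda>w. 0)" by (simp add: mulr_diff)
    moreover have "(\<lambda>w. g w - g' w) \<in> Rs (Mset DI)" using g g' by (auto simp: Rs_def)
    ultimately have "(\<lambda>w. g w - g' w) = (\<lambda>w. 0)" using mulr_nonzero[OF f _ f0] by blast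
    then have "g = g'" by (simp add: fun_eq_iff)
    then show "x = y" using xg yg vv by simp
  qed
  have fR: "finite (Rs (Mset D) :: (nat \<times> nat \<Rightarrow> 'a) set)" by (rule finite_Rs[OF finite_Mset])
  have c1: "card ?Dom \<le> card (Rs (Mset D) :: (nat \<times> nat \<Rightarrow> 'a) set)"
    by (rule card_inj_on_le[OF inj into fR])
  have c2: "card ?Dom = q ^ card (Mset DI) * q ^ card Z"
    using card_Rs[OF finite_Mset, of DI, where 'b='a] card_funcsetE[OF finZ, of "UNIV::'a set"] card_F
    by (simp add: card_cartesian_product)
  have c3: "card (Rs (Mset D) :: (nat \<times> nat \<Rightarrow> 'a) set) = q ^ card (Mset D)"
    using card_Rs[OF finite_Mset, of D, where 'b='a] card_F by simp
  have c4: "card (Mset D) \<le> card (Mset DI) + W" using card_Mset_step[of DI D] by (simp add: D_def)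
  have h1: "q ^ (card (Mset DI) + card Z) \<le> q ^ card (Mset D)" using c1 c2 c3 by (simp add: power_add)
  have h2: "q ^ card (Mset D) \<le> q ^ (card (Mset DI) + W)"
  proof (rule power_increasing[OF c4])
    show "1 \<le> q" using q_pos by linarith
  qed
  have "q ^ (card (Mset DI) + card Z) \<le> q ^ (card (Mset DI) + W)" using h1 h2 by (rule order_trans)
  moreover have q1: "1 < q" using q_pos by linarith
  ultimately have "card (Mset DI) + card Z \<le> card (Mset DI) + W"
    using power_le_imp_le_exp by blast
  then show ?thesis by simp
qed

end

context hfield
begin

definition Yf :: "'a \<Rightarrow> 'a set" where "Yf x = {y. y ^ al = Tr x}"

lemma Pts_Sigma: "Pts = (SIGMA x:UNIV. Yf x)"
  by (auto simp: Pts_def Yf_def)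

lemma Yf_zero: "Tr x = 0 \<Longrightarrow> Yf x = {0}"
  using al_ge2 by (auto simp: Yf_def)

lemma card_Yf: "Tr x \<noteq> 0 \<Longrightarrow> card (Yf x) = al"
  unfolding Yf_def by (rule card_fib[OF Tr_in_T])

definition sval :: nat where "sval = q0 + (q - q0) * al"

lemma card_Pts: "card Pts = sval"
proof -
  have "card Pts = (\<Sum>x\<in>UNIV. card (Yf x))" unfolding Pts_Sigma by (simp add: card_SigmaI)
  also have "\<dots> = (\<Sum>x\<in>UNIV. if Tr x = 0 then 1 else al)"
    by (intro sum.cong refl) (simp add: Yf_zero card_Yf)
  also have "\<dots> = card Kset + card (UNIV - Kset) * al"
    by (simp add: sum.If_cases Kset_def Collect_neg_eq Compl_eq_Diff_UNIV)
  also have "card (UNIV - Kset) = q - q0" using card_K card_F by (simp add: card_Diff_subset)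
  finally show ?thesis using card_K by (simp add: sval_def)
qed

lemma of_nat_q0: "(of_nat q0 :: 'a) = 0"
  using char_p m_ge q0_def by simp

lemma two_al: "(2 * of_nat al :: 'a) = 1"
proof -
  have "2 * al = q0 + 1" using q0_al al_ge2 by simp
  then have "(of_nat (2 * al) :: 'a) = of_nat q0 + 1" by simp
  then show ?thesis using of_nat_q0 by simp
qed

definition wP :: "'a \<times> 'a \<Rightarrow> 'a" where "wP P = (if snd P = 0 then 1 else 2)"

lemma wP_nz: "wP P \<noteq> 0" using two_ne0 by (simp add: wP_def)

lemma fib_sum_gen:
  assumes t: "Tr x \<noteq> 0" and J: "J < 2 * al"
  shows "(\<Sum>y\<in>Yf x. y ^ J) = (if J = 0 then of_nat al else if J = al then of_nat al * Tr x else 0)"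
proof -
  have tT: "Tr x \<in> Tset" by (rule Tr_in_T)
  consider "J = 0" | "0 < J \<and> J < al" | "J = al" | "al < J" by linarith
  then show ?thesis
  proof cases
    case 1 then show ?thesis using card_Yf[OF t] by simp
  next
    case 2 then show ?thesis using fib_sum0[OF tT t, of J] by (simp add: Yf_def)
  next
    case 3
    have "(\<Sum>y\<in>Yf x. y ^ J) = (\<Sum>y\<in>Yf x. Tr x)" using 3 by (intro sum.cong) (auto simp: Yf_def)
    then show ?thesis using 3 card_Yf[OF t] al_ge2 by simp
  next
    case 4
    have "(\<Sum>y\<in>Yf x. y ^ J) = (\<Sum>y\<in>Yf x. Tr x * y ^ (J - al))"
    proof (intro sum.cong refl)
      fix y assume "y \<in> Yf x"
      then have "y ^ al = Tr x" by (simp add: Yf_def)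
      moreover have "y ^ J = y ^ al * y ^ (J - al)" using 4 by (simp add: power_add[symmetric])
      ultimately show "y ^ J = Tr x * y ^ (J - al)" by simp
    qed
    also have "\<dots> = Tr x * (\<Sum>y\<in>Yf x. y ^ (J - al))" by (simp add: sum_distrib_left)
    also have "(\<Sum>y\<in>Yf x. y ^ (J - al)) = 0" using fib_sum0[OF tT t, of "J - al"] 4 J by (simp add: Yf_def)
    finally show ?thesis using 4 al_ge2 by simp
  qed
qed

lemma inner_w:
  assumes J: "J < 2 * al"
  shows "(\<Sum>y\<in>Yf x. wP (x, y) * y ^ J) = (if J = 0 then 1 else if J = al then Tr x else 0)"
proof (cases "Tr x = 0")
  case True
  then show ?thesis using al_ge2 by (simp add: Yf_zero wP_def)
next
  case False
  have "(\<Sum>y\<in>Yf x. wP (x, y) * y ^ J) = (\<Sum>y\<in>Yf x. 2 * y ^ J)"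
  proof (intro sum.cong refl)
    fix y assume "y \<in> Yf x"
    then have "y \<noteq> 0" using False al_ge2 by (auto simp: Yf_def power_0_left)
    then show "wP (x, y) * y ^ J = 2 * y ^ J" by (simp add: wP_def)
  qed
  also have "\<dots> = 2 * (\<Sum>y\<in>Yf x. y ^ J)" by (simp add: sum_distrib_left)
  also have "\<dots> = (if J = 0 then 1 else if J = al then Tr x else 0)"
    using fib_sum_gen[OF False J] two_al by (simp add: mult.assoc[symmetric])
  finally show ?thesis .
qed

lemma orth_mono:
  assumes J: "J < 2 * al" and W: "al * I + q0 * J < al * (q - 1)"
  shows "(\<Sum>P\<in>Pts. wP P * fst P ^ I * snd P ^ J) = 0"
proof -
  have "(\<Sum>x\<in>UNIV. \<Sum>y\<in>Yf x. wP (x, y) * x ^ I * y ^ J) = (\<Sum>(x,y)\<in>Sigma UNIV Yf. wP (x, y) * x ^ I * y ^ J)"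
    by (rule sum.Sigma) auto
  then have "(\<Sum>P\<in>Pts. wP P * fst P ^ I * snd P ^ J) = (\<Sum>x\<in>UNIV. \<Sum>y\<in>Yf x. wP (x, y) * x ^ I * y ^ J)"
    unfolding Pts_Sigma by (simp add: split_def)
  also have "\<dots> = (\<Sum>x\<in>UNIV. x ^ I * (\<Sum>y\<in>Yf x. wP (x, y) * y ^ J))"
    by (simp add: sum_distrib_left algebra_simps)
  also have "\<dots> = (\<Sum>x\<in>UNIV. x ^ I * (if J = 0 then 1 else if J = al then Tr x else 0))"
    using inner_w[OF J] by simp
  also have "\<dots> = 0"
  proof -
    consider "J = 0" | "J = al" | "J \<noteq> 0 \<and> J \<noteq> al" by blast
    then show ?thesis
    proof cases
      case 1
      have "I < q - 1" using W 1 by simp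
      then show ?thesis using 1 pow_sum0 by simp
    next
      case 2
      have "al * (I + q0) < al * (q - 1)" using W 2 by (simp add: algebra_simps)
      then have lt: "I + q0 < q - 1" by simp
      have z1: "(\<Sum>x\<in>(UNIV::'a set). x ^ (I + q0)) = 0" by (rule pow_sum0) (use lt in simp)
      have z2: "(\<Sum>x\<in>(UNIV::'a set). x ^ (I + 1)) = 0" by (rule pow_sum0) (use lt q0_ge3 in simp)
      have "(\<Sum>x\<in>UNIV. x ^ I * (if J = 0 then 1 else if J = al then Tr x else 0))
          = (\<Sum>x\<in>(UNIV::'a set). x ^ (I + q0) + x ^ (I + 1))"
        using 2 al_ge2 by (intro sum.cong refl) (simp add: Tr_def algebra_simps power_add)
      also have "\<dots> = 0" by (simp only: sum.distrib z1 z2) simp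
      finally show ?thesis .
    next
      case 3 then show ?thesis by simp
    qed
  qed
  finally show ?thesis .
qed

lemma orth:
  assumes f: "f \<in> Rs (Mset m1)" and g: "g \<in> Rs (Mset m2)" and W: "m1 + m2 < al * (q - 1)"
  shows "(\<Sum>P\<in>Pts. wP P * (ev (Mset m1) f P * ev (Mset m2) g P)) = 0"
proof -
  have "(\<Sum>P\<in>Pts. wP P * (ev (Mset m1) f P * ev (Mset m2) g P))
      = (\<Sum>P\<in>Pts. \<Sum>a\<in>Mset m1. \<Sum>b\<in>Mset m2. f a * g b * (wP P * fst P ^ (fst a + fst b) * snd P ^ (snd a + snd b)))"
  proof (rule sum.cong[OF refl])
    fix P
    have "ev (Mset m1) f P * ev (Mset m2) g P = (\<Sum>a\<in>Mset m1. \<Sum>b\<in>Mset m2. (f a * fst P ^ fst a * snd P ^ snd a) * (g b * fst P ^ fst b * snd P ^ snd b))"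
      unfolding ev_def by (rule sum_product)
    then have "wP P * (ev (Mset m1) f P * ev (Mset m2) g P) = (\<Sum>a\<in>Mset m1. \<Sum>b\<in>Mset m2. wP P * ((f a * fst P ^ fst a * snd P ^ snd a) * (g b * fst P ^ fst b * snd P ^ snd b)))"
      by (simp add: sum_distrib_left)
    also have "\<dots> = (\<Sum>a\<in>Mset m1. \<Sum>b\<in>Mset m2. f a * g b * (wP P * fst P ^ (fst a + fst b) * snd P ^ (snd a + snd b)))"
      by (intro sum.cong refl) (simp add: power_add algebra_simps)
    finally show "wP P * (ev (Mset m1) f P * ev (Mset m2) g P) = (\<Sum>a\<in>Mset m1. \<Sum>b\<in>Mset m2. f a * g b * (wP P * fst P ^ (fst a + fst b) * snd P ^ (snd a + snd b)))" .
  qed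
  also have "\<dots> = (\<Sum>a\<in>Mset m1. \<Sum>b\<in>Mset m2. f a * g b * (\<Sum>P\<in>Pts. wP P * fst P ^ (fst a + fst b) * snd P ^ (snd a + snd b)))"
    by (simp add: sum.swap[of _ Pts] sum_distrib_left)
  also have "\<dots> = 0"
  proof (intro sum.neutral ballI)
    fix a b assume a: "a \<in> Mset m1" and b: "b \<in> Mset m2"
    have J: "snd a + snd b < 2 * al" using a b by (simp add: Mset_def)
    have "al * (fst a + fst b) + q0 * (snd a + snd b) = wt a + wt b" by (simp add: wt_def algebra_simps)
    also have "\<dots> \<le> m1 + m2" using a b by (simp add: Mset_def add_mono)
    finally have "al * (fst a + fst b) + q0 * (snd a + snd b) < al * (q - 1)" using W by simp
    then show "f a * g b * (\<Sum>P\<in>Pts. wP P * fst P ^ (fst a + fst b) * snd P ^ (snd a + snd b)) = 0"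
      using orth_mono[OF J] by simp
  qed
  finally show ?thesis .
qed

end

lemma vecs_Rs: "vecs n = Rs {..<n}"
  by (auto simp: vecs_def Rs_def)

lemma finite_vecs: "finite (vecs n :: (nat \<Rightarrow> 'a::{field,finite}) set)"
  unfolding vecs_Rs by (rule finite_Rs) simp

lemma card_vecs: "card (vecs n :: (nat \<Rightarrow> 'a::{field,finite}) set) = card (UNIV::'a set) ^ n"
  unfolding vecs_Rs using card_Rs[of "{..<n}", where 'b='a] by simp

lemma linear_code_subspace:
  assumes "linear_code n C"
  shows "module.subspace (sc :: 'a::field \<Rightarrow> _) C"
proof -
  interpret V: vector_space "sc :: 'a \<Rightarrow> (nat \<Rightarrow> 'a) \<Rightarrow> (nat \<Rightarrow> 'a)" by (rule vector_space_sc)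
  show ?thesis using assms unfolding V.subspace_def linear_code_def
    by (simp add: zero_fun_def plus_fun_def)
qed

lemma card_lin:
  fixes C :: "(nat \<Rightarrow> 'a::{field,finite}) set"
  assumes lc: "linear_code n C"
  shows "card C = card (UNIV::'a set) ^ vdim C"
proof -
  interpret V: vector_space "sc :: 'a \<Rightarrow> (nat \<Rightarrow> 'a) \<Rightarrow> (nat \<Rightarrow> 'a)" by (rule vector_space_sc)
  have sub: "V.subspace C" by (rule linear_code_subspace[OF lc])
  have finC: "finite C" using lc finite_vecs[of n, where 'a='a] by (auto simp: linear_code_def intro: finite_subset)
  obtain B where B: "B \<subseteq> C" "V.independent B" "C \<subseteq> V.span B" "card B = V.dim C"
    by (rule V.basis_exists)
  have finB: "finite B" using B(1) finC finite_subset by blast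
  have spanB: "V.span B = C" using B(1,3) sub by (rule V.span_subspace)
  define \<phi> where "\<phi> = (\<lambda>u. \<Sum>v\<in>B. sc (u v) v)"
  have img: "\<phi> ` (B \<rightarrow>\<^sub>E UNIV) = C"
  proof
    show "\<phi> ` (B \<rightarrow>\<^sub>E UNIV) \<subseteq> C" unfolding spanB[symmetric] V.span_finite[OF finB] \<phi>_def by auto
    show "C \<subseteq> \<phi> ` (B \<rightarrow>\<^sub>E UNIV)"
    proof
      fix c assume "c \<in> C"
      then have "c \<in> range (\<lambda>u. \<Sum>v\<in>B. sc (u v) v)" unfolding spanB[symmetric] V.span_finite[OF finB] .
      then obtain u where u: "c = (\<Sum>v\<in>B. sc (u v) v)" by auto
      have "c = \<phi> (restrict u B)" unfolding u \<phi>_def by (intro sum.cong) auto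
      moreover have "restrict u B \<in> B \<rightarrow>\<^sub>E UNIV" by simp
      ultimately show "c \<in> \<phi> ` (B \<rightarrow>\<^sub>E UNIV)" by blast
    qed
  qed
  have inj: "inj_on \<phi> (B \<rightarrow>\<^sub>E UNIV)"
  proof (rule inj_onI)
    fix u u' assume u: "u \<in> B \<rightarrow>\<^sub>E UNIV" and u': "u' \<in> B \<rightarrow>\<^sub>E UNIV" and e: "\<phi> u = \<phi> u'"
    have "(\<Sum>v\<in>B. sc (u v - u' v) v) = (\<Sum>v\<in>B. sc (u v) v - sc (u' v) v)"
      by (intro sum.cong refl) (rule V.scale_left_diff_distrib)
    also have "\<dots> = (\<Sum>v\<in>B. sc (u v) v) - (\<Sum>v\<in>B. sc (u' v) v)"
      by (simp only: sum_subtractf)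
    also have "\<dots> = 0" using e unfolding \<phi>_def by (simp only: diff_self)
    finally have z: "(\<Sum>v\<in>B. sc (u v - u' v) v) = 0" .
    have "\<forall>v\<in>B. u v - u' v = 0"
    proof (rule ccontr)
      assume "\<not> (\<forall>v\<in>B. u v - u' v = 0)"
      then have "(\<exists>v\<in>B. u v - u' v \<noteq> 0) \<and> (\<Sum>v\<in>B. sc (u v - u' v) v) = 0" using z by blast
      then have "\<exists>w. (\<exists>v\<in>B. w v \<noteq> 0) \<and> (\<Sum>v\<in>B. sc (w v) v) = 0" by (rule exI[of _ "\<lambda>v. u v - u' v"])
      then have "V.dependent B" unfolding V.dependent_finite[OF finB] .
      then show False using B(2) by simp
    qed
    then show "u = u'" by (intro PiE_ext[OF u u']) simp
  qed
  have "card C = card (B \<rightarrow>\<^sub>E (UNIV::'a set))" using card_image[OF inj] img by simp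
  also have "\<dots> = card (UNIV::'a set) ^ card B" by (rule card_funcsetE[OF finB])
  finally show ?thesis using B(4) by (simp add: vdim_def)
qed

lemma vdim_from_card:
  fixes C :: "(nat \<Rightarrow> 'a::{field,finite}) set"
  assumes "linear_code n C" "card C = card (UNIV::'a set) ^ k"
  shows "vdim C = k"
proof -
  have "card (UNIV::'a set) ^ vdim C = card (UNIV::'a set) ^ k" using card_lin[OF assms(1)] assms(2) by simp
  moreover have "card (UNIV::'a set) > 1"
  proof -
    have "{0::'a, 1} \<subseteq> UNIV" by simp
    then have "card {0::'a, 1} \<le> card (UNIV::'a set)" by (intro card_mono) auto
    then show ?thesis by simp
  qed
  ultimately show ?thesis by (simp add: power_inject_exp)
qed

lemma card_UNIV_gt1: "card (UNIV::'a::{field,finite} set) > 1"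
proof -
  have "{0::'a, 1} \<subseteq> UNIV" by simp
  then have "card {0::'a, 1} \<le> card (UNIV::'a set)" by (intro card_mono) auto
  then show ?thesis by simp
qed

lemma linear_code_diff:
  assumes "linear_code n C" "x \<in> C" "y \<in> C"
  shows "(\<lambda>i. x i - y i) \<in> C"
proof -
  have "sc (-1) y \<in> C" using assms by (auto simp: linear_code_def)
  then have "(\<lambda>i. x i + sc (-1) y i) \<in> C" using assms by (auto simp: linear_code_def)
  then show ?thesis by (simp add: sc_def)
qed

lemma dual_linear: "linear_code n (dual_code n C)"
proof -
  have "(\<lambda>i. x i + y i) \<in> dual_code n C" if "x \<in> dual_code n C" "y \<in> dual_code n C" for x y
    using that by (auto simp: dual_code_def vecs_def distrib_right sum.distrib)
  moreover have "sc c x \<in> dual_code n C" if "x \<in> dual_code n C" for c x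
    using that by (auto simp: dual_code_def vecs_def sc_def mult.assoc sum_distrib_left[symmetric])
  ultimately show ?thesis by (auto simp: linear_code_def dual_code_def vecs_def)
qed

lemma dual_card_le:
  fixes C :: "(nat \<Rightarrow> 'a::{field,finite}) set"
  assumes lc: "linear_code n C" and cC: "card C = card (UNIV::'a set) ^ k"
  shows "card (dual_code n C) \<le> card (UNIV::'a set) ^ (n - k)"
proof -
  let ?Q = "card (UNIV::'a set)"
  have Q1: "?Q > 1" by (rule card_UNIV_gt1)
  let ?P = "\<lambda>J. J \<subseteq> {..<n} \<and> inj_on (\<lambda>c. restrict c J) C"
  have P0: "?P {..<n}"
  proof -
    have "inj_on (\<lambda>c. restrict c {..<n}) C"
    proof (rule inj_onI)
      fix x y assume xy: "x \<in> C" "y \<in> C" "restrict x {..<n} = restrict y {..<n}"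
      show "x = y"
      proof
        fix j show "x j = y j"
        proof (cases "j < n")
          case True
          then have "restrict x {..<n} j = restrict y {..<n} j" using xy(3) by simp
          then show ?thesis using True by simp
        next
          case False
          have "x \<in> vecs n" "y \<in> vecs n" using xy lc by (auto simp: linear_code_def)
          then show ?thesis using False by (simp add: vecs_def)
        qed
      qed
    qed
    then show ?thesis by simp
  qed
  define c0 where "c0 = (LEAST c. \<exists>J. ?P J \<and> card J = c)"
  obtain J where J: "?P J" "card J = c0" using LeastI_ex[of "\<lambda>c. \<exists>J. ?P J \<and> card J = c"] P0 c0_def by blast
  have minJ: "\<not> ?P J'" if "card J' < card J" for J'
  proof
    assume "?P J'"
    then have "c0 \<le> card J'" unfolding c0_def by (intro Least_le) blast
    then show False using that J by simp
  qed
  have finJ: "finite J" using J(1) finite_subset by blast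
  have kJ: "k \<le> card J"
  proof -
    have "card C \<le> card (J \<rightarrow>\<^sub>E (UNIV::'a set))"
      using J(1) by (intro card_inj_on_le[of "\<lambda>c. restrict c J"]) (auto simp: finJ finite_PiE)
    moreover have "card (J \<rightarrow>\<^sub>E (UNIV::'a set)) = ?Q ^ card J" by (rule card_funcsetE[OF finJ])
    ultimately have "?Q ^ k \<le> ?Q ^ card J" using cC by simp
    then show ?thesis using Q1 power_le_imp_le_exp by blast
  qed
  have unit: "\<exists>b\<in>C. b i = 1 \<and> (\<forall>j\<in>J - {i}. b j = 0)" if i: "i \<in> J" for i
  proof -
    have "card (J - {i}) < card J" by (rule card_Diff1_less[OF finJ i])
    then have "\<not> ?P (J - {i})" by (rule minJ)
    then have "\<not> inj_on (\<lambda>c. restrict c (J - {i})) C" using J(1) by auto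
    then obtain x y where xy: "x \<in> C" "y \<in> C" "x \<noteq> y" "restrict x (J - {i}) = restrict y (J - {i})"
      unfolding inj_on_def by blast
    define d where "d = (\<lambda>j. x j - y j)"
    have dC: "d \<in> C" unfolding d_def using linear_code_diff[OF lc xy(1,2)] .
    have d0: "\<forall>j\<in>J - {i}. d j = 0"
    proof
      fix j assume j: "j \<in> J - {i}"
      then have "restrict x (J - {i}) j = restrict y (J - {i}) j" using xy(4) by simp
      then show "d j = 0" using j by (simp add: d_def)
    qed
    have "restrict x J \<noteq> restrict y J" using J(1) xy(1-3) by (auto simp: inj_on_def)
    then obtain j where "j \<in> J" "x j \<noteq> y j" by (auto simp: restrict_def fun_eq_iff split: if_splits)
    then have di: "d i \<noteq> 0" using d0 by (cases "j = i") (auto simp: d_def)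
    define b where "b = sc (inverse (d i)) d"
    have "b \<in> C" using dC lc by (auto simp: b_def linear_code_def)
    moreover have "b i = 1" using di by (simp add: b_def sc_def)
    moreover have "\<forall>j\<in>J - {i}. b j = 0" using d0 by (simp add: b_def sc_def)
    ultimately show ?thesis by blast
  qed
  have "\<forall>i\<in>J. \<exists>b. b \<in> C \<and> b i = 1 \<and> (\<forall>j\<in>J - {i}. b j = 0)" using unit by blast
  then obtain bf where bf0: "\<forall>i\<in>J. bf i \<in> C \<and> bf i i = 1 \<and> (\<forall>j\<in>J - {i}. bf i j = 0)"
    by (rule bchoice[elim_format]) blast
  then have bf: "\<And>i. i \<in> J \<Longrightarrow> bf i \<in> C \<and> bf i i = 1 \<and> (\<forall>j\<in>J - {i}. bf i j = 0)" by blast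
  let ?R = "{..<n} - J"
  have inj2: "inj_on (\<lambda>v. restrict v ?R) (dual_code n C)"
  proof (rule inj_onI)
    fix v v' assume v: "v \<in> dual_code n C" and v': "v' \<in> dual_code n C" and e: "restrict v ?R = restrict v' ?R"
    define d where "d = (\<lambda>j. v j - v' j)"
    have dD: "d \<in> dual_code n C" unfolding d_def using linear_code_diff[OF dual_linear v v'] .
    have dout: "d j = 0" if "j \<notin> J" for j
    proof (cases "j < n")
      case True
      then have "j \<in> ?R" using that by simp
      then have "restrict v ?R j = restrict v' ?R j" using e by simp
      then show ?thesis using \<open>j \<in> ?R\<close> by (simp add: d_def)
    next
      case False
      then show ?thesis using v v' by (simp add: d_def dual_code_def vecs_def)
    qed
    have "d i = 0" if i: "i \<in> J" for i
    proof -
      have "(\<Sum>j<n. d j * bf i j) = 0" using dD bf[OF i] by (auto simp: dual_code_def)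
      moreover have "(\<Sum>j<n. d j * bf i j) = (\<Sum>j\<in>{i}. d j * bf i j)"
      proof (rule sum.mono_neutral_right)
        show "{i} \<subseteq> {..<n}" using i J(1) by auto
        show "\<forall>j\<in>{..<n} - {i}. d j * bf i j = 0"
        proof
          fix j assume "j \<in> {..<n} - {i}"
          then show "d j * bf i j = 0" using dout bf[OF i] by (cases "j \<in> J") auto
        qed
      qed auto
      ultimately show ?thesis using bf[OF i] by simp
    qed
    then have "\<forall>j. d j = 0" using dout by blast
    then show "v = v'" by (simp add: d_def fun_eq_iff)
  qed
  have "card (dual_code n C) \<le> card (?R \<rightarrow>\<^sub>E (UNIV::'a set))"
  proof (rule card_inj_on_le[OF inj2])
    show "(\<lambda>v. restrict v ?R) ` dual_code n C \<subseteq> ?R \<rightarrow>\<^sub>E UNIV" by (intro image_subsetI) simp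
    show "finite (?R \<rightarrow>\<^sub>E (UNIV::'a set))" by (intro finite_PiE) auto
  qed
  also have "\<dots> = ?Q ^ (n - card J)"
    using J(1) finJ by (simp add: card_funcsetE card_Diff_subset)
  also have "\<dots> \<le> ?Q ^ (n - k)" using kJ Q1 by (intro power_increasing) auto
  finally show ?thesis .
qed

definition scl :: "(nat \<Rightarrow> 'a::field) \<Rightarrow> (nat \<Rightarrow> 'a) \<Rightarrow> (nat \<Rightarrow> 'a)" where
  "scl l v = (\<lambda>i. l i * v i)"

lemma scl_inv: "(\<And>i. l i \<noteq> 0) \<Longrightarrow> scl (\<lambda>i. inverse (l i)) (scl l v) = v"
  by (simp add: scl_def fun_eq_iff)

lemma scl_inv2: "(\<And>i. l i \<noteq> 0) \<Longrightarrow> scl l (scl (\<lambda>i. inverse (l i)) v) = v"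
  by (simp add: scl_def fun_eq_iff)

lemma inj_scl: "(\<And>i. l i \<noteq> 0) \<Longrightarrow> inj (scl l)"
  by (metis injI scl_inv)

lemma linear_code_scl:
  assumes "linear_code n C"
  shows "linear_code n (scl l ` C)"
proof -
  have "scl l x \<in> vecs n" if "x \<in> C" for x using that assms by (auto simp: linear_code_def vecs_def scl_def)
  moreover have "(\<lambda>i. 0) \<in> scl l ` C"
  proof -
    have "scl l (\<lambda>i. 0) = (\<lambda>i. 0)" by (simp add: scl_def)
    then show ?thesis using assms by (metis image_eqI linear_code_def)
  qed
  moreover have "(\<lambda>i. scl l x i + scl l y i) \<in> scl l ` C" if "x \<in> C" "y \<in> C" for x y
  proof -
    have "(\<lambda>i. scl l x i + scl l y i) = scl l (\<lambda>i. x i + y i)" by (simp add: scl_def fun_eq_iff algebra_simps)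
    moreover have "(\<lambda>i. x i + y i) \<in> C" using that assms by (auto simp: linear_code_def)
    ultimately show ?thesis by blast
  qed
  moreover have "sc c (scl l x) \<in> scl l ` C" if "x \<in> C" for c x
  proof -
    have "sc c (scl l x) = scl l (sc c x)" by (simp add: scl_def sc_def fun_eq_iff algebra_simps)
    moreover have "sc c x \<in> C" using that assms by (auto simp: linear_code_def)
    ultimately show ?thesis by blast
  qed
  ultimately show ?thesis unfolding linear_code_def by blast
qed

lemma hamming_scl: "(\<And>i. l i \<noteq> 0) \<Longrightarrow> hamming_dist n (scl l x) (scl l y) = hamming_dist n x y"
  by (simp add: hamming_dist_def scl_def)

lemma dual_scl:
  assumes l: "\<And>i. l i \<noteq> 0"
  shows "dual_code n (scl l ` C) = scl (\<lambda>i. inverse (l i)) ` dual_code n C"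
proof
  show "dual_code n (scl l ` C) \<subseteq> scl (\<lambda>i. inverse (l i)) ` dual_code n C"
  proof
    fix v assume v: "v \<in> dual_code n (scl l ` C)"
    have "scl l v \<in> dual_code n C"
      using v by (auto simp: dual_code_def vecs_def scl_def mult.assoc mult.left_commute)
    moreover have "v = scl (\<lambda>i. inverse (l i)) (scl l v)" using scl_inv[OF l] by simp
    ultimately show "v \<in> scl (\<lambda>i. inverse (l i)) ` dual_code n C" by blast
  qed
  show "scl (\<lambda>i. inverse (l i)) ` dual_code n C \<subseteq> dual_code n (scl l ` C)"
  proof
    fix v assume "v \<in> scl (\<lambda>i. inverse (l i)) ` dual_code n C"
    then obtain w where w: "w \<in> dual_code n C" "v = scl (\<lambda>i. inverse (l i)) w" by blast
    have "\<forall>c\<in>C. (\<Sum>i<n. v i * scl l c i) = 0"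
    proof
      fix c assume "c \<in> C"
      then have "(\<Sum>i<n. w i * c i) = 0" using w by (auto simp: dual_code_def)
      moreover have "(\<Sum>i<n. v i * scl l c i) = (\<Sum>i<n. w i * c i)"
        using w(2) l by (intro sum.cong refl) (simp add: scl_def field_simps)
      ultimately show "(\<Sum>i<n. v i * scl l c i) = 0" by simp
    qed
    moreover have "v \<in> vecs n" using w by (auto simp: dual_code_def vecs_def scl_def)
    ultimately show "v \<in> dual_code n (scl l ` C)" by (auto simp: dual_code_def)
  qed
qed

lemma code_params_scl:
  fixes C :: "(nat \<Rightarrow> 'a::{field,finite}) set"
  assumes l: "\<And>i. l i \<noteq> 0" and cp: "code_params n k d C"
  shows "code_params n k d (scl l ` C)"
proof -
  have lc: "linear_code n C" using cp by (simp add: code_params_def)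
  have lc': "linear_code n (scl l ` C)" by (rule linear_code_scl[OF lc])
  have "inj (scl l)" by (rule inj_scl) (rule l)
  then have "card (scl l ` C) = card C" by (simp add: card_image inj_on_subset)
  then have "card (scl l ` C) = card (UNIV::'a set) ^ k" using card_lin[OF lc] cp by (simp add: code_params_def)
  then have "vdim (scl l ` C) = k" by (rule vdim_from_card[OF lc'])
  moreover have "\<forall>x\<in>scl l ` C. \<forall>y\<in>scl l ` C. x \<noteq> y \<longrightarrow> int (hamming_dist n x y) \<ge> d"
    using cp hamming_scl[OF l] by (auto simp: code_params_def)
  ultimately show ?thesis using lc' by (simp add: code_params_def)
qed

lemma hull_linear: "linear_code n C \<Longrightarrow> linear_code n (code_hull n C)"
  using dual_linear[of n C] by (auto simp: linear_code_def code_hull_def)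

lemma hull_step:
  fixes C :: "(nat \<Rightarrow> 'a::field) set"
  assumes lc: "linear_code n C" and r: "r \<in> code_hull n C" and i: "i < n" and ri: "r i \<noteq> 0"
    and t: "t \<noteq> 0" and t2: "t ^ 2 \<noteq> 1"
  shows "code_hull n (scl (\<lambda>j. if j = i then t else 1) ` C) = {c \<in> code_hull n C. c i = 0}"
proof -
  let ?l = "\<lambda>j. if j = i then t else 1"
  have l0: "\<And>j. ?l j \<noteq> 0" using t by simp
  have key: "(\<Sum>j<n. scl ?l c j * scl ?l c2 j) = (\<Sum>j<n. c j * c2 j) + (t^2 - 1) * (c i * c2 i)" for c c2
  proof -
    have "(\<Sum>j<n. scl ?l c j * scl ?l c2 j) = (\<Sum>j<n. c j * c2 j + (if j = i then (t^2 - 1) * (c i * c2 i) else 0))"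
      by (intro sum.cong refl) (simp add: scl_def power2_eq_square algebra_simps)
    also have "\<dots> = (\<Sum>j<n. c j * c2 j) + (t^2 - 1) * (c i * c2 i)"
      using i by (simp add: sum.distrib)
    finally show ?thesis .
  qed
  have rC: "r \<in> C" and rD: "r \<in> dual_code n C" using r by (auto simp: code_hull_def)
  show ?thesis
  proof
    show "code_hull n (scl ?l ` C) \<subseteq> {c \<in> code_hull n C. c i = 0}"
    proof
      fix c' assume c': "c' \<in> code_hull n (scl ?l ` C)"
      then obtain c where c: "c \<in> C" "c' = scl ?l c" by (auto simp: code_hull_def)
      have cD: "\<forall>c2\<in>C. (\<Sum>j<n. c' j * scl ?l c2 j) = 0" using c' by (auto simp: code_hull_def dual_code_def)
      have "(\<Sum>j<n. c' j * scl ?l r j) = 0" using cD rC by blast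
      moreover have "(\<Sum>j<n. c j * r j) = 0"
      proof -
        have "(\<Sum>j<n. r j * c j) = 0" using rD c(1) by (auto simp: dual_code_def)
        then show ?thesis by (simp add: mult.commute)
      qed
      ultimately have "(t^2 - 1) * (c i * r i) = 0" using key[of c r] c(2) by simp
      then have ci: "c i = 0" using t2 ri by simp
      then have cc: "c' = c" using c(2) by (simp add: scl_def fun_eq_iff)
      have "\<forall>c2\<in>C. (\<Sum>j<n. c j * c2 j) = 0"
      proof
        fix c2 assume "c2 \<in> C"
        then have "(\<Sum>j<n. c' j * scl ?l c2 j) = 0" using cD by blast
        then have "(\<Sum>j<n. scl ?l c j * scl ?l c2 j) = 0" using c(2) by simp
        then show "(\<Sum>j<n. c j * c2 j) = 0" using key[of c c2] ci by simp
      qed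
      moreover have "c \<in> vecs n" using c(1) lc by (auto simp: linear_code_def)
      ultimately show "c' \<in> {c \<in> code_hull n C. c i = 0}" using cc c(1) ci
        by (auto simp: code_hull_def dual_code_def)
    qed
    show "{c \<in> code_hull n C. c i = 0} \<subseteq> code_hull n (scl ?l ` C)"
    proof
      fix c assume c: "c \<in> {c \<in> code_hull n C. c i = 0}"
      then have cC: "c \<in> C" and cD: "c \<in> dual_code n C" and ci: "c i = 0" by (auto simp: code_hull_def)
      have cc: "scl ?l c = c" using ci by (simp add: scl_def fun_eq_iff)
      have "c \<in> scl ?l ` C" using cC cc by (metis image_eqI)
      moreover have "\<forall>c2\<in>C. (\<Sum>j<n. c j * scl ?l c2 j) = 0"
      proof
        fix c2 assume c2: "c2 \<in> C"
        have "(\<Sum>j<n. c j * scl ?l c2 j) = (\<Sum>j<n. scl ?l c j * scl ?l c2 j)" using cc by simp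
        also have "\<dots> = (\<Sum>j<n. c j * c2 j)" using key[of c c2] ci by simp
        also have "\<dots> = 0" using cD c2 by (auto simp: dual_code_def)
        finally show "(\<Sum>j<n. c j * scl ?l c2 j) = 0" .
      qed
      moreover have "c \<in> vecs n" using cD by (auto simp: dual_code_def)
      ultimately show "c \<in> code_hull n (scl ?l ` C)" by (auto simp: code_hull_def dual_code_def)
    qed
  qed
qed

lemma card_zero_coord:
  fixes H :: "(nat \<Rightarrow> 'a::{field,finite}) set"
  assumes lH: "linear_code n H" and r: "r \<in> H" and ri: "r i \<noteq> 0"
  shows "card H = card {c \<in> H. c i = 0} * card (UNIV::'a set)"
proof -
  let ?H0 = "{c \<in> H. c i = 0}"
  have finH: "finite H" using lH finite_vecs[of n, where 'a='a] by (auto simp: linear_code_def intro: finite_subset)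
  define \<psi> where "\<psi> = (\<lambda>(c, a). (\<lambda>j. c j + a * (r j / r i)))"
  have bij: "bij_betw \<psi> (?H0 \<times> UNIV) H"
  proof (rule bij_betw_byWitness[where f' = "\<lambda>h. ((\<lambda>j. h j - h i * (r j / r i)), h i)"])
    show "\<forall>x\<in>?H0 \<times> UNIV. ((\<lambda>j. \<psi> x j - \<psi> x i * (r j / r i)), \<psi> x i) = x"
      using ri by (auto simp: \<psi>_def fun_eq_iff)
    show "\<forall>h\<in>H. \<psi> ((\<lambda>j. h j - h i * (r j / r i)), h i) = h"
      by (auto simp: \<psi>_def fun_eq_iff)
    show "\<psi> ` (?H0 \<times> UNIV) \<subseteq> H"
    proof
      fix h assume "h \<in> \<psi> ` (?H0 \<times> UNIV)"
      then obtain c a where ca: "c \<in> H" "h = (\<lambda>j. c j + a * (r j / r i))" by (auto simp: \<psi>_def)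
      have "sc (a / r i) r \<in> H" using r lH by (auto simp: linear_code_def)
      then have "(\<lambda>j. c j + sc (a / r i) r j) \<in> H" using ca(1) lH by (auto simp: linear_code_def)
      then show "h \<in> H" using ca(2) by (simp add: sc_def)
    qed
    show "(\<lambda>h. ((\<lambda>j. h j - h i * (r j / r i)), h i)) ` H \<subseteq> ?H0 \<times> UNIV"
    proof
      fix x assume "x \<in> (\<lambda>h. ((\<lambda>j. h j - h i * (r j / r i)), h i)) ` H"
      then obtain h where h: "h \<in> H" "x = ((\<lambda>j. h j - h i * (r j / r i)), h i)" by blast
      have "sc (- (h i / r i)) r \<in> H" using r lH by (auto simp: linear_code_def)
      then have "(\<lambda>j. h j + sc (- (h i / r i)) r j) \<in> H" using h(1) lH by (auto simp: linear_code_def)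
      then have "(\<lambda>j. h j - h i * (r j / r i)) \<in> H" by (simp add: sc_def)
      then show "x \<in> ?H0 \<times> UNIV" using h(2) ri by simp
    qed
  qed
  then have "card H = card (?H0 \<times> (UNIV::'a set))" by (simp add: bij_betw_same_card)
  then show ?thesis by (simp add: card_cartesian_product)
qed

lemma hull_reduce:
  fixes C :: "(nat \<Rightarrow> 'a::{field,finite}) set"
  assumes tex: "\<exists>t::'a. t \<noteq> 0 \<and> t ^ 2 \<noteq> 1"
  shows "code_params n k d C \<Longrightarrow> code_params n k' d' (dual_code n C) \<Longrightarrow>
         card (code_hull n C) = card (UNIV::'a set) ^ Suc h \<Longrightarrow>
         \<exists>C'::(nat \<Rightarrow> 'a) set. code_params n k d C' \<and> code_params n k' d' (dual_code n C') \<and> vdim (code_hull n C') = 1"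
proof (induction h arbitrary: C)
  case 0
  have "linear_code n (code_hull n C)" using 0 by (intro hull_linear) (simp add: code_params_def)
  then have "vdim (code_hull n C) = 1" using 0 by (intro vdim_from_card[of n]) auto
  then show ?case using 0 by blast
next
  case (Suc h)
  let ?Q = "card (UNIV::'a set)"
  have lc: "linear_code n C" using Suc by (simp add: code_params_def)
  have lH: "linear_code n (code_hull n C)" by (rule hull_linear[OF lc])
  have Q1: "?Q > 1" by (rule card_UNIV_gt1)
  have "1 < ?Q ^ Suc (Suc h)" by (rule one_less_power[OF Q1]) simp
  then have "card (code_hull n C) > 1" using Suc(4) by simp
  then obtain r where r: "r \<in> code_hull n C" "r \<noteq> (\<lambda>j. 0)"
  proof -
    assume th: "\<And>r. r \<in> code_hull n C \<Longrightarrow> r \<noteq> (\<lambda>j. 0) \<Longrightarrow> thesis"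
    assume c: "card (code_hull n C) > 1"
    show thesis
    proof (rule ccontr)
      assume "\<not> thesis"
      then have "code_hull n C \<subseteq> {(\<lambda>j. 0)}" using th by blast
      then have "card (code_hull n C) \<le> card {(\<lambda>j::nat. 0::'a)}" by (intro card_mono) auto
      then have "card (code_hull n C) \<le> 1" by simp
      then show False using c by simp
    qed
  qed
  then obtain i where ri: "r i \<noteq> 0" by auto
  have i: "i < n"
  proof (rule ccontr)
    assume "\<not> i < n"
    moreover have "r \<in> vecs n" using r(1) lH by (auto simp: linear_code_def)
    ultimately have "r i = 0" by (simp add: vecs_def)
    then show False using ri by simp
  qed
  obtain t :: 'a where t: "t \<noteq> 0" "t ^ 2 \<noteq> 1" using tex by blast
  let ?l = "\<lambda>j. if j = i then t else 1"
  have l0: "\<And>j. ?l j \<noteq> 0" using t by simp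
  define C' where "C' = scl ?l ` C"
  have cp1: "code_params n k d C'" unfolding C'_def by (rule code_params_scl[OF l0 Suc(2)])
  have "dual_code n C' = scl (\<lambda>j. inverse (?l j)) ` dual_code n C" unfolding C'_def by (rule dual_scl[OF l0])
  moreover have "\<And>j. inverse (?l j) \<noteq> 0" using t by simp
  ultimately have cp2: "code_params n k' d' (dual_code n C')" using code_params_scl Suc(3) by metis
  have hull': "code_hull n C' = {c \<in> code_hull n C. c i = 0}"
    unfolding C'_def by (rule hull_step[OF lc r(1) i ri t])
  have "card (code_hull n C) = card {c \<in> code_hull n C. c i = 0} * ?Q" by (rule card_zero_coord[OF lH r(1) ri])
  then have "card {c \<in> code_hull n C. c i = 0} * ?Q = ?Q ^ Suc h * ?Q" using Suc(4) by (simp add: mult.commute)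
  then have "card (code_hull n C') = ?Q ^ Suc h" using hull' Q1 by simp
  then show ?case using Suc.IH[OF cp1 cp2] by blast
qed

context hfield
begin

lemma arith_k: "\<exists>k. q0 = 2*k+1 \<and> al = k+1 \<and> gg = k^2 \<and> q = 4*k^2+4*k+1 \<and> sval = 4*k^3+6*k^2+4*k+1"
proof -
  obtain k where k: "q0 = 2*k+1" "al = k+1" using q0_k by blast
  have g: "gg = (al - 1)^2" by (simp add: gg_def)
  have sv: "sval = q0 + (q0^2 - q0) * al" by (simp add: sval_def)
  have aux: "\<And>Q A G S. Q = 2*k+1 \<Longrightarrow> A = k+1 \<Longrightarrow> G = (A - 1)^2 \<Longrightarrow> S = Q + (Q^2 - Q) * A \<Longrightarrow>
      G = k^2 \<and> Q^2 = 4*k^2+4*k+1 \<and> S = 4*k^3+6*k^2+4*k+1"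
  proof -
    fix Q A G S :: nat
    assume h: "Q = 2*k+1" "A = k+1" "G = (A - 1)^2" "S = Q + (Q^2 - Q) * A"
    have Q2: "Q^2 = 4*k^2+4*k+1" using h by (simp add: power2_eq_square algebra_simps)
    have "Q^2 - Q = 4*k^2+2*k" using Q2 h by simp
    then have "S = 4*k^3+6*k^2+4*k+1" using h by (simp add: power2_eq_square power3_eq_cube algebra_simps)
    then show "G = k^2 \<and> Q^2 = 4*k^2+4*k+1 \<and> S = 4*k^3+6*k^2+4*k+1" using h Q2 by simp
  qed
  from aux[OF k g sv] k show ?thesis by blast
qed

lemma rel1: "al * (q - 1) = sval + 2 * gg - 1"
proof -
  obtain k where k: "q0 = 2*k+1" "al = k+1" "gg = k^2" "q = 4*k^2+4*k+1" "sval = 4*k^3+6*k^2+4*k+1"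
    using arith_k by blast
  show ?thesis using k by (simp add: power2_eq_square power3_eq_cube algebra_simps)
qed

lemma rel_s: "2 * sval = q0 * (q0^2 + 1)"
proof -
  obtain k where k: "q0 = 2*k+1" "al = k+1" "gg = k^2" "q = 4*k^2+4*k+1" "sval = 4*k^3+6*k^2+4*k+1"
    using arith_k by blast
  show ?thesis using k by (simp add: power2_eq_square power3_eq_cube algebra_simps)
qed

lemma rel_g: "4 * gg = (q0 - 1)^2"
proof -
  obtain k where k: "q0 = 2*k+1" "al = k+1" "gg = k^2" "q = 4*k^2+4*k+1" "sval = 4*k^3+6*k^2+4*k+1"
    using arith_k by blast
  show ?thesis using k by (simp add: power2_eq_square algebra_simps)
qed

lemma gg_al: "al \<le> 2 * gg" and gg_al2: "al = 2 \<or> al + 1 \<le> 2 * gg"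
proof -
  obtain k where k: "q0 = 2*k+1" "al = k+1" "gg = k^2" using arith_k by blast
  have a: "al = k + 1" and g: "gg = k * k" using k(2,3) by (simp_all add: power2_eq_square)
  have k1: "k \<ge> 1" using al_ge2 a by linarith
  have "al \<le> 2 * gg \<and> (al = 2 \<or> al + 1 \<le> 2 * gg)"
  proof (cases "k = 1")
    case True then show ?thesis using a g by simp
  next
    case False
    then have "k \<ge> 2" using k1 by simp
    then have "2 * k \<le> k * k" by simp
    then have "al + 1 \<le> 2 * gg" using a g k1 by linarith
    then show ?thesis by simp
  qed
  then show "al \<le> 2 * gg" "al = 2 \<or> al + 1 \<le> 2 * gg" by auto
qed

lemma sval_big: "sval \<ge> 15"
proof -
  obtain k where k: "q0 = 2*k+1" "al = k+1" "gg = k^2" "q = 4*k^2+4*k+1" "sval = 4*k^3+6*k^2+4*k+1"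
    using arith_k by blast
  have "k \<ge> 1" using al_ge2 k by linarith
  then have "k^3 \<ge> 1" "k^2 \<ge> 1" by simp_all
  then show ?thesis using k \<open>k \<ge> 1\<close> by linarith
qed

lemma zero_Pts: "(0, 0) \<in> Pts"
  using al_ge2 q0_ge3 by (simp add: Pts_def Tr_def zero_power)

lemma Pts_x0: "P \<in> Pts \<Longrightarrow> fst P = 0 \<Longrightarrow> P = (0, 0)"
proof -
  assume P: "P \<in> Pts" "fst P = 0"
  have "Tr 0 = 0" using q0_ge3 by (simp add: Tr_def zero_power)
  then have "snd P ^ al = 0" using P by (simp add: Pts_def)
  then have "snd P = 0" by simp
  then show ?thesis using P by (cases P) simp
qed

lemma ev_origin: "(0,0) \<in> M \<Longrightarrow> finite M \<Longrightarrow> ev M g (0, 0) = g (0, 0)"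
proof -
  assume z: "(0,0) \<in> M" "finite M"
  have "ev M g (0, 0) = (\<Sum>w\<in>M. if w = (0,0) then g w else 0)"
    unfolding ev_def by (intro sum.cong refl) (auto simp: zero_power)
  also have "\<dots> = g (0,0)" using z by (simp add: sum.delta)
  finally show ?thesis .
qed

end

locale hcode = hfield +
  fixes r :: int
  assumes r1: "int gg - 2 \<le> 2 * r" and r2: "2 * r \<le> int sval - int gg - 3"
begin

definition nn :: nat where "nn = sval - 1"
definition mm :: nat where "mm = nat (2 * r + 1 + int gg)"
definition mm' :: nat where "mm' = nat (int sval + int gg - 3 - 2 * r)"
definition Dp :: "('a \<times> 'a) set" where "Dp = Pts - {(0, 0)}"

lemma gg_pos: "gg \<ge> 1" using al_ge2 by (simp add: gg_def)

lemma mm_int: "int mm = 2 * r + 1 + int gg" using r1 gg_pos by (simp add: mm_def)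
lemma mm'_int: "int mm' = int sval + int gg - 3 - 2 * r" using r2 gg_pos by (simp add: mm'_def)

lemma mm_sum: "mm + mm' < al * (q - 1)"
proof -
  have "int (mm + mm') = int sval + 2 * int gg - 2" using mm_int mm'_int by simp
  moreover have "int (al * (q - 1)) = int sval + 2 * int gg - 1" using rel1 sval_big by simp
  ultimately show ?thesis by linarith
qed

lemma mm_ge: "2 * gg \<le> mm + 1" using mm_int r1 by linarith
lemma mm'_ge: "2 * gg \<le> mm'" using mm'_int r2 by linarith
lemma mm_le: "mm + 2 \<le> sval" using mm_int r2 by linarith
lemma mm'_le: "mm' + 1 \<le> sval" using mm'_int r1 by linarith

lemma al_mm: "al \<le> mm"
proof (cases "al = 2")
  case True
  then have "gg = 1" by (simp add: gg_def)
  then have "r \<ge> 0" using r1 by linarith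
  then show ?thesis using mm_int True \<open>gg = 1\<close> by linarith
next
  case False
  then have "al + 1 \<le> 2 * gg" using gg_al2 by simp
  then show ?thesis using mm_ge by linarith
qed

lemma al_mm': "al \<le> mm'" using mm'_ge gg_al by linarith

lemma card_Mset_mm: "card (Mset mm) = nat (2 * r + 2)"
proof -
  have "card (Mset mm) = mm + 1 - gg" using mm_ge by (intro card_Mset) simp
  then show ?thesis using mm_int by simp
qed

lemma card_Mset_mm': "card (Mset mm') = mm' + 1 - gg"
  using mm'_ge by (intro card_Mset) simp

lemma card_Dp: "card Dp = nn"
  using card_Pts zero_Pts by (simp add: Dp_def nn_def card_Diff_singleton)

definition enm :: "nat \<Rightarrow> 'a \<times> 'a" where "enm = (SOME e. bij_betw e {..<nn} Dp)"

lemma ee_bij: "bij_betw enm {..<nn} Dp"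
proof -
  have "\<exists>e. bij_betw e {0..<card Dp} Dp" by (rule ex_bij_betw_nat_finite) simp
  then have "\<exists>e. bij_betw e {..<nn} Dp" using card_Dp by (simp add: atLeast0LessThan)
  then show ?thesis unfolding enm_def by (rule someI_ex)
qed

definition vec :: "('a \<times> 'a \<Rightarrow> 'a) \<Rightarrow> nat \<Rightarrow> 'a" where
  "vec h = (\<lambda>i. if i < nn then h (enm i) else 0)"

lemma vec_vecs: "vec h \<in> vecs nn" by (simp add: vec_def vecs_def)

lemma sum_vec: "(\<Sum>i<nn. vec h1 i * vec h2 i) = (\<Sum>P\<in>Dp. h1 P * h2 P)"
proof -
  have "(\<Sum>i<nn. vec h1 i * vec h2 i) = (\<Sum>i<nn. h1 (enm i) * h2 (enm i))" by (simp add: vec_def)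
  also have "\<dots> = (\<Sum>P\<in>Dp. h1 P * h2 P)" by (rule sum.reindex_bij_betw[OF ee_bij])
  finally show ?thesis .
qed

lemma hd_vec: "hamming_dist nn (vec h1) (vec h2) = card {P \<in> Dp. h1 P \<noteq> h2 P}"
proof -
  have "{i. i < nn \<and> vec h1 i \<noteq> vec h2 i} = {i \<in> {..<nn}. h1 (enm i) \<noteq> h2 (enm i)}" by (auto simp: vec_def)
  moreover have "bij_betw enm {i \<in> {..<nn}. h1 (enm i) \<noteq> h2 (enm i)} {P \<in> Dp. h1 P \<noteq> h2 P}"
  proof -
    let ?S = "{i \<in> {..<nn}. h1 (enm i) \<noteq> h2 (enm i)}"
    have b: "bij_betw enm ?S (enm ` ?S)" by (rule bij_betw_subset[OF ee_bij]) auto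
    have im: "enm ` {..<nn} = Dp" using ee_bij by (simp add: bij_betw_def)
    have "enm ` ?S = {P \<in> Dp. h1 P \<noteq> h2 P}"
    proof
      show "enm ` ?S \<subseteq> {P \<in> Dp. h1 P \<noteq> h2 P}" using im by auto
      show "{P \<in> Dp. h1 P \<noteq> h2 P} \<subseteq> enm ` ?S"
      proof
        fix P assume P: "P \<in> {P \<in> Dp. h1 P \<noteq> h2 P}"
        then obtain i where "i < nn" "P = enm i" using im by (metis (no_types, lifting) imageE lessThan_iff mem_Collect_eq)
        then show "P \<in> enm ` ?S" using P by auto
      qed
    qed
    then show ?thesis using b by simp
  qed
  ultimately show ?thesis unfolding hamming_dist_def by (simp add: bij_betw_same_card)
qed

lemma vec_eq: "vec h1 = vec h2 \<longleftrightarrow> (\<forall>P\<in>Dp. h1 P = h2 P)"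
proof -
  have "vec h1 = vec h2 \<longleftrightarrow> (\<forall>i<nn. h1 (enm i) = h2 (enm i))" by (auto simp: vec_def fun_eq_iff)
  also have "\<dots> \<longleftrightarrow> (\<forall>P\<in>Dp. h1 P = h2 P)"
  proof -
    have im: "enm ` {..<nn} = Dp" using ee_bij by (simp add: bij_betw_def)
    show ?thesis
    proof
      assume a: "\<forall>i<nn. h1 (enm i) = h2 (enm i)"
      show "\<forall>P\<in>Dp. h1 P = h2 P"
      proof
        fix P assume "P \<in> Dp"
        then obtain i where "i < nn" "P = enm i" using im by (metis imageE lessThan_iff)
        then show "h1 P = h2 P" using a by simp
      qed
    next
      assume "\<forall>P\<in>Dp. h1 P = h2 P"
      then show "\<forall>i<nn. h1 (enm i) = h2 (enm i)" using im by auto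
    qed
  qed
  finally show ?thesis .
qed

lemma hd_bound:
  assumes f: "f \<in> Rs (Mset W)" and f': "f' \<in> Rs (Mset W)" and ne: "f \<noteq> f'"
  shows "nn - W \<le> hamming_dist nn (vec (ev (Mset W) f)) (vec (ev (Mset W) f'))"
proof -
  let ?h = "\<lambda>w. f w - f' w"
  have h: "?h \<in> Rs (Mset W)" using f f' by (auto simp: Rs_def)
  have h0: "?h \<noteq> (\<lambda>w. 0)" using ne by (auto simp: fun_eq_iff)
  let ?Z = "{P \<in> Dp. ev (Mset W) ?h P = 0}"
  have "card ?Z \<le> W" by (rule zero_count[OF h h0]) (auto simp: Dp_def)
  have "{P \<in> Dp. ev (Mset W) f P \<noteq> ev (Mset W) f' P} = Dp - ?Z" by (auto simp: ev_diff)
  then have "hamming_dist nn (vec (ev (Mset W) f)) (vec (ev (Mset W) f')) = card (Dp - ?Z)" by (simp add: hd_vec)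
  also have "\<dots> = nn - card ?Z" using card_Dp by (simp add: card_Diff_subset)
  finally show ?thesis using \<open>card ?Z \<le> W\<close> by simp
qed

definition C0 :: "(nat \<Rightarrow> 'a) set" where
  "C0 = (\<lambda>f. vec (ev (Mset mm) f)) ` Rs (Mset mm)"

definition G0 :: "(nat \<times> nat \<Rightarrow> 'a) set" where
  "G0 = {g \<in> Rs (Mset mm'). g (0, 0) = 0}"

definition E0 :: "(nat \<Rightarrow> 'a) set" where
  "E0 = (\<lambda>g. vec (\<lambda>P. wP P * ev (Mset mm') g P)) ` G0"

lemma mm_nn: "mm < nn" using mm_le by (simp add: nn_def)

lemma linear_C0: "linear_code nn C0"
proof -
  have z: "(\<lambda>i. 0) \<in> C0"
  proof -
    have "(\<lambda>w. 0::'a) \<in> Rs (Mset mm)" by (simp add: Rs_def)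
    moreover have "vec (ev (Mset mm) (\<lambda>w. 0)) = (\<lambda>i. 0)" by (simp add: vec_def ev_zero fun_eq_iff)
    ultimately show ?thesis unfolding C0_def by (metis image_eqI)
  qed
  have a: "(\<lambda>i. x i + y i) \<in> C0" if xy: "x \<in> C0" "y \<in> C0" for x y
  proof -
    obtain f where f: "f \<in> Rs (Mset mm)" "x = vec (ev (Mset mm) f)" using xy(1) unfolding C0_def by blast
    obtain f' where f': "f' \<in> Rs (Mset mm)" "y = vec (ev (Mset mm) f')" using xy(2) unfolding C0_def by blast
    have "(\<lambda>w. f w + f' w) \<in> Rs (Mset mm)" using f f' by (auto simp: Rs_def)
    moreover have "(\<lambda>i. x i + y i) = vec (ev (Mset mm) (\<lambda>w. f w + f' w))"
      using f f' by (simp add: vec_def ev_add fun_eq_iff)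
    ultimately show ?thesis unfolding C0_def by blast
  qed
  have s: "sc c x \<in> C0" if xC: "x \<in> C0" for c x
  proof -
    obtain f where f: "f \<in> Rs (Mset mm)" "x = vec (ev (Mset mm) f)" using xC unfolding C0_def by blast
    have "(\<lambda>w. c * f w) \<in> Rs (Mset mm)" using f by (auto simp: Rs_def)
    moreover have "sc c x = vec (ev (Mset mm) (\<lambda>w. c * f w))" using f by (simp add: vec_def ev_smult sc_def fun_eq_iff)
    ultimately show ?thesis unfolding C0_def by blast
  qed
  have "C0 \<subseteq> vecs nn" using vec_vecs by (auto simp: C0_def)
  then show ?thesis using z a s by (simp add: linear_code_def)
qed

lemma inj_C0: "inj_on (\<lambda>f. vec (ev (Mset mm) f)) (Rs (Mset mm))"
proof (rule inj_onI)
  fix f f' assume f: "f \<in> Rs (Mset mm)" and f': "f' \<in> Rs (Mset mm)" and e: "vec (ev (Mset mm) f) = vec (ev (Mset mm) f')"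
  show "f = f'"
  proof (rule ccontr)
    assume "f \<noteq> f'"
    then have "nn - mm \<le> hamming_dist nn (vec (ev (Mset mm) f)) (vec (ev (Mset mm) f'))" by (rule hd_bound[OF f f'])
    then show False using e mm_nn by (simp add: hamming_dist_def)
  qed
qed

lemma card_C0: "card C0 = card (UNIV::'a set) ^ nat (2 * r + 2)"
proof -
  have "card C0 = card (Rs (Mset mm) :: (nat \<times> nat \<Rightarrow> 'a) set)" unfolding C0_def by (rule card_image[OF inj_C0])
  also have "\<dots> = card (UNIV::'a set) ^ card (Mset mm)" by (rule card_Rs[OF finite_Mset])
  finally show ?thesis using card_Mset_mm by simp
qed

lemma dist_C0: "\<forall>x\<in>C0. \<forall>y\<in>C0. x \<noteq> y \<longrightarrow> int (hamming_dist nn x y) \<ge> int sval - 2 * r - int gg - 2"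
proof (intro ballI impI)
  fix x y assume x: "x \<in> C0" and y: "y \<in> C0" and ne: "x \<noteq> y"
  obtain f where f: "f \<in> Rs (Mset mm)" "x = vec (ev (Mset mm) f)" using x unfolding C0_def by blast
  obtain f' where f': "f' \<in> Rs (Mset mm)" "y = vec (ev (Mset mm) f')" using y unfolding C0_def by blast
  have "f \<noteq> f'" using ne f f' by auto
  then have "nn - mm \<le> hamming_dist nn x y" using hd_bound[OF f(1) f'(1)] f f' by simp
  moreover have "int (nn - mm) = int sval - 2 * r - int gg - 2" using mm_nn mm_int sval_big by (simp add: nn_def)
  ultimately show "int (hamming_dist nn x y) \<ge> int sval - 2 * r - int gg - 2" by linarith
qed

lemma origin_Mset: "(0, 0) \<in> Mset D" using al_ge2 by (simp add: Mset_def wt_def)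

lemma G0_Rs: "G0 = Rs (Mset mm' - {(0,0)})"
  by (auto simp: G0_def Rs_def)

lemma Pts_split: "Pts = insert (0, 0) Dp" using zero_Pts by (auto simp: Dp_def)

lemma E0_dual: "E0 \<subseteq> dual_code nn C0"
proof
  fix v assume "v \<in> E0"
  then obtain g where g: "g \<in> G0" "v = vec (\<lambda>P. wP P * ev (Mset mm') g P)" unfolding E0_def by blast
  have gR: "g \<in> Rs (Mset mm')" and g00: "g (0, 0) = 0" using g(1) by (auto simp: G0_def)
  have "\<forall>c\<in>C0. (\<Sum>i<nn. v i * c i) = 0"
  proof
    fix c assume "c \<in> C0"
    then obtain f where f: "f \<in> Rs (Mset mm)" "c = vec (ev (Mset mm) f)" unfolding C0_def by blast
    let ?F = "\<lambda>P. wP P * (ev (Mset mm) f P * ev (Mset mm') g P)"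
    have "(\<Sum>i<nn. v i * c i) = (\<Sum>P\<in>Dp. wP P * ev (Mset mm') g P * ev (Mset mm) f P)"
      using g(2) f(2) by (simp add: sum_vec)
    also have "\<dots> = (\<Sum>P\<in>Dp. ?F P)" by (simp add: algebra_simps)
    also have "\<dots> = (\<Sum>P\<in>Pts. ?F P)"
    proof -
      have "ev (Mset mm') g (0, 0) = 0" using g00 origin_Mset by (simp add: ev_origin finite_Mset)
      moreover have "(0, 0) \<notin> Dp" by (simp add: Dp_def)
      ultimately show ?thesis unfolding Pts_split by simp
    qed
    also have "\<dots> = 0" by (rule orth[OF f(1) gR mm_sum])
    finally show "(\<Sum>i<nn. v i * c i) = 0" .
  qed
  moreover have "v \<in> vecs nn" using g(2) vec_vecs by simp
  ultimately show "v \<in> dual_code nn C0" by (simp add: dual_code_def)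
qed

lemma inj_E0: "inj_on (\<lambda>g. vec (\<lambda>P. wP P * ev (Mset mm') g P)) G0"
proof (rule inj_onI)
  fix g g' assume g: "g \<in> G0" and g': "g' \<in> G0" and e: "vec (\<lambda>P. wP P * ev (Mset mm') g P) = vec (\<lambda>P. wP P * ev (Mset mm') g' P)"
  show "g = g'"
  proof (rule ccontr)
    assume ne: "g \<noteq> g'"
    let ?h = "\<lambda>w. g w - g' w"
    have h: "?h \<in> Rs (Mset mm')" using g g' by (auto simp: G0_def Rs_def)
    have h0: "?h \<noteq> (\<lambda>w. 0)" using ne by (auto simp: fun_eq_iff)
    have "\<forall>P\<in>Pts. ev (Mset mm') ?h P = 0"
    proof
      fix P assume P: "P \<in> Pts"
      show "ev (Mset mm') ?h P = 0"
      proof (cases "P = (0, 0)")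
        case True
        then show ?thesis using g g' origin_Mset by (simp add: ev_origin finite_Mset G0_def)
      next
        case False
        then have "P \<in> Dp" using P by (simp add: Dp_def)
        moreover have "\<forall>P\<in>Dp. wP P * ev (Mset mm') g P = wP P * ev (Mset mm') g' P"
          using e unfolding vec_eq .
        ultimately have "wP P * ev (Mset mm') g P = wP P * ev (Mset mm') g' P" by blast
        then show ?thesis using wP_nz by (simp add: ev_diff)
      qed
    qed
    then have "card Pts \<le> mm'" by (intro zero_count[OF h h0]) auto
    then show False using card_Pts mm'_le by simp
  qed
qed

lemma card_E0: "card E0 = card (UNIV::'a set) ^ (nn - nat (2 * r + 2))"
proof -
  have "card E0 = card G0" unfolding E0_def by (rule card_image[OF inj_E0])
  also have "\<dots> = card (UNIV::'a set) ^ card (Mset mm' - {(0,0)})" unfolding G0_Rs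
    by (rule card_Rs) (simp add: finite_Mset)
  also have "card (Mset mm' - {(0,0)}) = nn - nat (2 * r + 2)"
  proof -
    have "card (Mset mm' - {(0,0)}) = mm' - gg" using card_Mset_mm' origin_Mset finite_Mset
      by (simp add: card_Diff_singleton)
    moreover have "int (mm' - gg) = int (nn - nat (2 * r + 2))"
      using mm'_int mm'_ge r1 r2 sval_big gg_pos by (simp add: nn_def of_nat_diff)
    ultimately show ?thesis by simp
  qed
  finally show ?thesis .
qed

lemma dual_C0: "dual_code nn C0 = E0"
proof -
  have le: "card (dual_code nn C0) \<le> card (UNIV::'a set) ^ (nn - nat (2 * r + 2))"
    by (rule dual_card_le[OF linear_C0 card_C0])
  have fin: "finite (dual_code nn C0)" using dual_linear[of nn C0] finite_vecs[of nn, where 'a='a]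
    by (auto simp: linear_code_def intro: finite_subset)
  show ?thesis using card_subset_eq[OF fin E0_dual] le card_E0 card_mono[OF fin E0_dual] by simp
qed

lemma dist_E0: "\<forall>x\<in>E0. \<forall>y\<in>E0. x \<noteq> y \<longrightarrow> int (hamming_dist nn x y) \<ge> 2 * r - int gg + 3"
proof (intro ballI impI)
  fix x y assume x: "x \<in> E0" and y: "y \<in> E0" and ne: "x \<noteq> y"
  obtain g where g: "g \<in> G0" "x = vec (\<lambda>P. wP P * ev (Mset mm') g P)" using x unfolding E0_def by blast
  obtain g' where g': "g' \<in> G0" "y = vec (\<lambda>P. wP P * ev (Mset mm') g' P)" using y unfolding E0_def by blast
  have ne': "g \<noteq> g'" using ne g g' by auto
  let ?h = "\<lambda>w. g w - g' w"
  have h: "?h \<in> Rs (Mset mm')" using g g' by (auto simp: G0_def Rs_def)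
  have h0: "?h \<noteq> (\<lambda>w. 0)" using ne' by (auto simp: fun_eq_iff)
  let ?Z = "{P \<in> Dp. ev (Mset mm') ?h P = 0}"
  have sub: "insert (0, 0) ?Z \<subseteq> Pts" using zero_Pts by (auto simp: Dp_def)
  have vz: "\<forall>P\<in>insert (0, 0) ?Z. ev (Mset mm') ?h P = 0"
  proof -
    have "ev (Mset mm') ?h (0, 0) = ?h (0, 0)" by (rule ev_origin[OF origin_Mset finite_Mset])
    also have "\<dots> = 0" using g(1) g'(1) by (simp add: G0_def)
    finally show ?thesis by blast
  qed
  have "card (insert (0, 0) ?Z) \<le> mm'" using zero_count[OF h h0 sub] vz by blast
  moreover have "(0, 0) \<notin> ?Z" by (simp add: Dp_def)
  ultimately have cZ: "card ?Z + 1 \<le> mm'" by simp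
  have "{P \<in> Dp. wP P * ev (Mset mm') g P \<noteq> wP P * ev (Mset mm') g' P} = Dp - ?Z"
  proof -
    have "wP P * ev (Mset mm') g P \<noteq> wP P * ev (Mset mm') g' P \<longleftrightarrow> ev (Mset mm') ?h P \<noteq> 0" for P
      using wP_nz[of P] by (simp add: ev_diff)
    then show ?thesis by blast
  qed
  then have "hamming_dist nn x y = card (Dp - ?Z)" using g(2) g'(2) by (simp add: hd_vec)
  also have "\<dots> = nn - card ?Z" using card_Dp by (simp add: card_Diff_subset)
  finally have "hamming_dist nn x y = nn - card ?Z" .
  moreover have "card ?Z \<le> card Dp" by (intro card_mono) auto
  ultimately have "int (hamming_dist nn x y) = int nn - int (card ?Z)" using card_Dp by simp
  moreover have "int nn = int sval - 1" using sval_big by (simp add: nn_def)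
  ultimately show "int (hamming_dist nn x y) \<ge> 2 * r - int gg + 3" using cZ mm'_int by linarith
qed

lemma cp_C0: "code_params nn (nat (2 * r + 2)) (int sval - 2 * r - int gg - 2) C0"
  using linear_C0 vdim_from_card[OF linear_C0 card_C0] dist_C0 by (simp add: code_params_def)

lemma cp_E0: "code_params nn (nat (int sval - 2 * r - 3)) (2 * r - int gg + 3) (dual_code nn C0)"
proof -
  have lc: "linear_code nn (dual_code nn C0)" by (rule dual_linear)
  have "nn - nat (2 * r + 2) = nat (int sval - 2 * r - 3)" using r1 r2 sval_big gg_pos by (simp add: nn_def)
  then have "card (dual_code nn C0) = card (UNIV::'a set) ^ nat (int sval - 2 * r - 3)" using dual_C0 card_E0 by simp
  then have "vdim (dual_code nn C0) = nat (int sval - 2 * r - 3)" by (rule vdim_from_card[OF lc])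
  then show ?thesis using lc dist_E0 dual_C0 by (simp add: code_params_def)
qed

lemma code_exists:
  "\<exists>C::(nat \<Rightarrow> 'a) set. code_params nn (nat (2 * r + 2)) (int sval - 2 * r - int gg - 2) C \<and>
     vdim (code_hull nn C) = 1 \<and>
     code_params nn (nat (int sval - 2 * r - 3)) (2 * r - int gg + 3) (dual_code nn C)"
proof -
  obtain \<sigma> :: 'a where \<sigma>: "\<sigma> ^ 2 = 2" using sqrt2 by blast
  have \<sigma>0: "\<sigma> \<noteq> 0" using \<sigma> two_ne0 by auto
  define l where "l = (\<lambda>i. if i < nn \<and> snd (enm i) \<noteq> 0 then \<sigma> else 1)"
  have l0: "\<And>i. l i \<noteq> 0" using \<sigma>0 by (simp add: l_def)
  have ll: "l i * l i = wP (enm i)" if "i < nn" for i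
    using that \<sigma> by (simp add: l_def wP_def power2_eq_square)
  define C1 where "C1 = scl l ` C0"
  have cp1: "code_params nn (nat (2 * r + 2)) (int sval - 2 * r - int gg - 2) C1"
    unfolding C1_def by (rule code_params_scl[OF l0 cp_C0])
  have dC1: "dual_code nn C1 = scl (\<lambda>i. inverse (l i)) ` dual_code nn C0"
    unfolding C1_def by (rule dual_scl[OF l0])
  have l0': "\<And>i. inverse (l i) \<noteq> 0" using l0 by simp
  have cp2: "code_params nn (nat (int sval - 2 * r - 3)) (2 * r - int gg + 3) (dual_code nn C1)"
    unfolding dC1 by (rule code_params_scl[OF l0' cp_E0])
  define X :: "nat \<times> nat \<Rightarrow> 'a" where "X = dl (1, 0)"
  have X10: "(1, 0) \<in> Mset D" if "al \<le> D" for D using that al_ge2 by (simp add: Mset_def wt_def)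
  have XR: "X \<in> Rs (Mset D)" if "al \<le> D" for D using X10[OF that] by (auto simp: Rs_def X_def dl_def)
  have evX: "ev (Mset D) X P = fst P" if "al \<le> D" for D P
    unfolding X_def using ev_dl[OF finite_Mset X10[OF that]] by simp
  define u where "u = scl l (vec (ev (Mset mm) X))"
  have uC1: "u \<in> C1" unfolding u_def C1_def C0_def using XR[OF al_mm] by blast
  have uD: "u \<in> dual_code nn C1"
  proof -
    have XG: "X \<in> G0" using XR[OF al_mm'] by (simp add: G0_def X_def dl_def)
    have "u = scl (\<lambda>i. inverse (l i)) (vec (\<lambda>P. wP P * ev (Mset mm') X P))"
    proof
      fix i
      show "u i = scl (\<lambda>i. inverse (l i)) (vec (\<lambda>P. wP P * ev (Mset mm') X P)) i"
      proof (cases "i < nn")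
        case True
        have "u i = l i * fst (enm i)" using True evX[OF al_mm] by (simp add: u_def scl_def vec_def)
        also have "\<dots> = inverse (l i) * (wP (enm i) * fst (enm i))"
          using ll[OF True] l0[of i] by (simp add: field_simps)
        also have "\<dots> = scl (\<lambda>i. inverse (l i)) (vec (\<lambda>P. wP P * ev (Mset mm') X P)) i"
          using True evX[OF al_mm'] by (simp add: scl_def vec_def)
        finally show ?thesis .
      next
        case False
        then show ?thesis by (simp add: u_def scl_def vec_def)
      qed
    qed
    moreover have "vec (\<lambda>P. wP P * ev (Mset mm') X P) \<in> dual_code nn C0"
      unfolding dual_C0 E0_def using XG by blast
    ultimately show ?thesis unfolding dC1 by blast
  qed
  have u0: "u \<noteq> (\<lambda>i. 0)"
  proof -
    have n0: "0 < nn" using sval_big by (simp add: nn_def)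
    have "enm 0 \<in> Dp" using ee_bij n0 by (auto simp: bij_betw_def)
    then have "fst (enm 0) \<noteq> 0" using Pts_x0[of "enm 0"] by (auto simp: Dp_def)
    then have "u 0 \<noteq> 0" using n0 l0[of 0] evX[OF al_mm] by (simp add: u_def scl_def vec_def)
    then show ?thesis by auto
  qed
  have lH: "linear_code nn (code_hull nn C1)" using cp1 by (intro hull_linear) (simp add: code_params_def)
  have "{(\<lambda>i. 0), u} \<subseteq> code_hull nn C1" using lH uC1 uD by (auto simp: code_hull_def linear_code_def)
  then have "card {(\<lambda>i::nat. 0::'a), u} \<le> card (code_hull nn C1)"
    using lH finite_vecs[of nn, where 'a='a] by (intro card_mono) (auto simp: linear_code_def intro: finite_subset)
  then have c2: "2 \<le> card (code_hull nn C1)" using u0 by (simp add: eq_commute)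
  have "vdim (code_hull nn C1) \<noteq> 0"
  proof
    assume "vdim (code_hull nn C1) = 0"
    then have "card (code_hull nn C1) = 1" using card_lin[OF lH] by simp
    then show False using c2 by simp
  qed
  then obtain h where h: "vdim (code_hull nn C1) = Suc h" by (cases "vdim (code_hull nn C1)") auto
  have ch: "card (code_hull nn C1) = card (UNIV::'a set) ^ Suc h" using card_lin[OF lH] h by simp
  have tex: "\<exists>t::'a. t \<noteq> 0 \<and> t ^ 2 \<noteq> 1"
  proof -
    have "(2::'a) \<noteq> 1"
    proof
      assume h21: "(2::'a) = 1"
      have "(1::'a) = 2 - 1" by simp
      also have "\<dots> = 0" using h21 by simp
      finally show False by simp
    qed
    then have "\<sigma> ^ 2 \<noteq> 1" using \<sigma> by simp
    then show ?thesis using \<sigma>0 by blast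
  qed
  show ?thesis using hull_reduce[OF tex cp1 cp2 ch] by blast
qed

end

theorem mainTheorem15:
  fixes p m q0 :: nat and s g r :: int
  assumes "prime p" and "odd p" and "m \<ge> 1" and "q0 = p ^ m"
    and "card (UNIV :: 'a::{field,finite} set) = q0 ^ 2"
    and "s = int q0 * (int q0 ^ 2 + 1) div 2"
    and "g = (int q0 - 1) ^ 2 div 4"
    and "(real_of_int g - 3) / 2 < real_of_int r"
    and "real_of_int r < (real_of_int s - real_of_int g - 2) / 2"
  shows "\<exists>C :: (nat \<Rightarrow> 'a) set.
           code_params (nat (s - 1)) (nat (2 * r + 2)) (s - 2 * r - g - 2) C \<and>
           vdim (code_hull (nat (s - 1)) C) = 1 \<and>
           code_params (nat (s - 1)) (nat (s - 2 * r - 3)) (2 * r - g + 3)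
             (dual_code (nat (s - 1)) C)"
proof -
  interpret H: hfield p m q0 "TYPE('a)"
    by unfold_locales (use assms in auto)
  have s: "s = int H.sval"
  proof -
    have "int (2 * H.sval) = int (q0 * (q0^2 + 1))" using H.rel_s by simp
    then have "int q0 * (int q0 ^ 2 + 1) = 2 * int H.sval" by (simp add: algebra_simps)
    then show ?thesis using assms(6) by simp
  qed
  have g: "g = int H.gg"
  proof -
    have "int (4 * H.gg) = int ((q0 - 1)^2)" using H.rel_g by simp
    moreover have "int ((q0 - 1)^2) = (int q0 - 1)^2" using H.q0_ge3 by (simp add: of_nat_diff)
    ultimately have "(int q0 - 1)^2 = 4 * int H.gg" by simp
    then show ?thesis using assms(7) by simp
  qed
  have b1: "int H.gg - 2 \<le> 2 * r"
  proof -
    have "real_of_int g - 3 < 2 * real_of_int r" using assms(8) by simp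
    then have "g - 3 < 2 * r" by linarith
    then show ?thesis using g by simp
  qed
  have b2: "2 * r \<le> int H.sval - int H.gg - 3"
  proof -
    have "2 * real_of_int r < real_of_int s - real_of_int g - 2" using assms(9) by simp
    then have "2 * r < s - g - 2" by linarith
    then show ?thesis using g s by simp
  qed
  interpret C: hcode p m q0 "TYPE('a)" r
    by unfold_locales (use b1 b2 in auto)
  have nn: "nat (int H.sval - 1) = C.nn" using H.sval_big by (simp add: C.nn_def nat_diff_distrib)
  show ?thesis using C.code_exists unfolding s g nn by simp
qed

end
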